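(* Let $N$ be a lattice of rank $3$, $\sigma\subset N_{\mathbb R}$ a rational strongly convex polyhedral cone, and $F_1,\ldots,F_\varkappa$ the compact facets of the polyhedron $\mathrm{conv}(\sigma\cap(N\setminus\{\mathbf 0\}))$. Suppose $$\mathbf{Hlb}_N(\sigma)=\Big(\bigcup_{i=1}^{\varkappa}F_i\Big)\cap N.$$ If for each $i$, $\{\mathbf s_{i,1},\ldots,\mathbf s_{i,\pi_i}\}$ is an arbitrary triangulation of $F_i$ into elementary lattice triangles, then $\bigcup_{i=1}^{\varkappa}\bigcup_{j=1}^{\pi_i}\mathrm{pos}(\mathbf s_{i,j})$ constitutes a subdivision of $\sigma$ into basic subcones w.r.t. $N$, such that for all $i,j$ the set of minimal generators of $\mathrm{pos}(\mathbf s_{i,j})$ is contained in $\mathbf{Hlb}_N(\sigma)$.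
   Context: $\mathbf{Hlb}_N(\sigma)$ (Hilbert basis) is the set of nonzero elements of $\sigma\cap N$ that cannot be written as the sum of two nonzero elements of $\sigma\cap N$. A lattice triangle $\mathbf s=\mathrm{conv}(n_0,n_1,n_2)$ ($n_i\in N$) is elementary if its only lattice points (in the lattice generated by $N\cap\mathrm{aff}(\mathbf s)$ after translating) are its vertices, i.e. $\mathbf s\cap N=\{n_0,n_1,n_2\}$. A cone is basic w.r.t. $N$ if its primitive minimal generators form part of a $\mathbb Z$-basis of $N$. *)

theory Defs
  imports "HOL-Analysis.Analysis"
begin

text \<open>The rank 3 lattice N, realised as the standard integer lattice in real^3.\<close>
definition latN :: "(real^3) set" where
  "latN = {x. \<forall>i. x $ i \<in> \<int>}"

text \<open>Positive hull: all nonnegative finite linear combinations (pos of the empty set is {0}).\<close>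
definition pos :: "(real^3) set \<Rightarrow> (real^3) set" where
  "pos S = {\<Sum>v\<in>V. c v *\<^sub>R v | V c. finite V \<and> V \<subseteq> S \<and> (\<forall>v\<in>V. c v \<ge> 0)}"

definition rational_sc_cone :: "(real^3) set \<Rightarrow> bool" where
  "rational_sc_cone \<sigma> \<longleftrightarrow>
     (\<exists>G. finite G \<and> G \<subseteq> latN \<and> \<sigma> = pos G) \<and> \<sigma> \<inter> uminus ` \<sigma> \<subseteq> {0}"

definition Hlb :: "(real^3) set \<Rightarrow> (real^3) set" where
  "Hlb \<sigma> = {x \<in> \<sigma> \<inter> latN - {0}. \<not> (\<exists>a\<in>\<sigma> \<inter> latN - {0}. \<exists>b\<in>\<sigma> \<inter> latN - {0}. x = a + b)}"

definition elementary_triangle :: "(real^3) set \<Rightarrow> bool" where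
  "elementary_triangle s \<longleftrightarrow>
     (\<exists>a b c. a \<in> latN \<and> b \<in> latN \<and> c \<in> latN \<and> card {a, b, c} = 3 \<and>
        \<not> affine_dependent {a, b, c} \<and> s = convex hull {a, b, c} \<and> s \<inter> latN = {a, b, c})"

definition elem_triangulation :: "(real^3) set set \<Rightarrow> (real^3) set \<Rightarrow> bool" where
  "elem_triangulation T F \<longleftrightarrow>
     finite T \<and> (\<forall>s\<in>T. elementary_triangle s) \<and> \<Union>T = F \<and>
     (\<forall>s\<in>T. \<forall>s'\<in>T. (s \<inter> s') face_of s \<and> (s \<inter> s') face_of s')"

definition primitive :: "real^3 \<Rightarrow> bool" where
  "primitive v \<longleftrightarrow> v \<in> latN \<and> v \<noteq> 0 \<and> (\<forall>t. 0 < t \<and> t < 1 \<longrightarrow> t *\<^sub>R v \<notin> latN)"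

definition min_gens :: "(real^3) set \<Rightarrow> (real^3) set" where
  "min_gens \<tau> = {v. primitive v \<and> {t *\<^sub>R v | t. t \<ge> 0} face_of \<tau>}"

definition Z_basis :: "(real^3) set \<Rightarrow> bool" where
  "Z_basis B \<longleftrightarrow> B \<subseteq> latN \<and> independent B \<and>
     (\<forall>x\<in>latN. \<exists>c :: real^3 \<Rightarrow> int. \<exists>B'. finite B' \<and> B' \<subseteq> B \<and> x = (\<Sum>b\<in>B'. of_int (c b) *\<^sub>R b))"

definition basic_cone :: "(real^3) set \<Rightarrow> bool" where
  "basic_cone \<tau> \<longleftrightarrow> (\<exists>B. Z_basis B \<and> min_gens \<tau> \<subseteq> B)"

text \<open>A subdivision of \<sigma> into cones: finitely many cones covering \<sigma> (together with
  the apex 0, to cover the degenerate case \<sigma> = {0}) and meeting pairwise in common faces.\<close>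
definition cone_subdivision :: "(real^3) set set \<Rightarrow> (real^3) set \<Rightarrow> bool" where
  "cone_subdivision C \<sigma> \<longleftrightarrow> finite C \<and> {0} \<union> \<Union>C = \<sigma> \<and>
     (\<forall>\<tau>\<in>C. \<forall>\<tau>'\<in>C. (\<tau> \<inter> \<tau>') face_of \<tau> \<and> (\<tau> \<inter> \<tau>') face_of \<tau>')"

end

theory Submission
  imports Defs
begin


lemma latN_add: "x \<in> latN \<Longrightarrow> y \<in> latN \<Longrightarrow> x + y \<in> latN"
  by (auto simp: latN_def)
lemma latN_diff: "x \<in> latN \<Longrightarrow> y \<in> latN \<Longrightarrow> x - y \<in> latN"
  by (auto simp: latN_def)
lemma latN_zero[simp]: "0 \<in> latN"
  by (auto simp: latN_def)
lemma latN_int_scale: "x \<in> latN \<Longrightarrow> of_int n *\<^sub>R x \<in> latN"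
  by (auto simp: latN_def)

lemma finite_bounded_latN:
  assumes "bounded S" shows "finite (S \<inter> latN)"
proof -
  obtain r where r: "\<And>x. x \<in> S \<Longrightarrow> norm x \<le> r" using assms bounded_iff by blast
  define I where "I = real_of_int ` {-\<lceil>r\<rceil>..\<lceil>r\<rceil>}"
  have fI: "finite I" unfolding I_def by simp
  define f where "f = (\<lambda>x::real^3. (x$1, x$2, x$3))"
  have "inj_on f (S \<inter> latN)"
    unfolding f_def inj_on_def by (auto simp: vec_eq_iff forall_3)
  moreover have "f ` (S \<inter> latN) \<subseteq> I \<times> I \<times> I"
  proof
    fix y assume "y \<in> f ` (S \<inter> latN)"
    then obtain x where x: "x \<in> S" "x \<in> latN" "y = f x" by auto
    have "x $ i \<in> I" for i
    proof -
      obtain k where k: "x $ i = real_of_int k" using x(2) unfolding latN_def by (auto elim: Ints_cases)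
      have "\<bar>x $ i\<bar> \<le> r" using component_le_norm_cart[of x i] r[OF x(1)] by linarith
      then have "\<bar>k\<bar> \<le> \<lceil>r\<rceil>" using k by linarith
      then show ?thesis using k unfolding I_def by (intro image_eqI[of _ _ k]) auto
    qed
    then show "y \<in> I \<times> I \<times> I" using x(3) unfolding f_def by auto
  qed
  ultimately show ?thesis using fI finite_subset finite_imageD by (metis finite_SigmaI)
qed

lemma sum_extend:
  assumes "finite W" "V \<subseteq> W"
  shows "(\<Sum>v\<in>W. (if v \<in> V then c v else 0) *\<^sub>R v) = (\<Sum>v\<in>V. c v *\<^sub>R (v::'a::real_vector))"
proof -
  have "(\<Sum>v\<in>W. (if v \<in> V then c v else 0) *\<^sub>R v) = (\<Sum>v\<in>W. if v \<in> V then c v *\<^sub>R v else 0)"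
    by (rule sum.cong) auto
  also have "\<dots> = (\<Sum>v\<in>W \<inter> V. c v *\<^sub>R v)" using assms(1) by (simp add: sum.inter_restrict)
  also have "W \<inter> V = V" using assms(2) by auto
  finally show ?thesis .
qed

lemma pos_eq: "pos S = convex_cone hull S"
proof
  show "pos S \<subseteq> convex_cone hull S"
  proof
    fix x assume "x \<in> pos S"
    then obtain V c where V: "finite V" "V \<subseteq> S" "\<forall>v\<in>V. c v \<ge> 0" "x = (\<Sum>v\<in>V. c v *\<^sub>R v)"
      unfolding pos_def by auto
    have "(\<Sum>v\<in>V. c v *\<^sub>R v) \<in> convex_cone hull S"
      using V(1-3)
    proof (induction V rule: finite_induct)
      case empty then show ?case by (simp add: convex_cone_hull_contains_0)
    next
      case (insert v V)
      then show ?case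
        by (simp add: convex_cone_hull_add convex_cone_hull_mul hull_inc)
    qed
    then show "x \<in> convex_cone hull S" using V by simp
  qed
next
  have "convex_cone (pos S)"
    unfolding convex_cone_iff
  proof (intro conjI ballI allI impI)
    show "0 \<in> pos S" unfolding pos_def by (rule CollectI, rule exI[of _ "{}"], auto)
  next
    fix x y assume "x \<in> pos S" "y \<in> pos S"
    then obtain V c W d where V: "finite V" "V \<subseteq> S" "\<forall>v\<in>V. c v \<ge> 0" "x = (\<Sum>v\<in>V. c v *\<^sub>R v)"
      and W: "finite W" "W \<subseteq> S" "\<forall>v\<in>W. d v \<ge> 0" "y = (\<Sum>v\<in>W. d v *\<^sub>R v)"
      unfolding pos_def by blast
    define e where "e v = (if v \<in> V then c v else 0) + (if v \<in> W then d v else 0)" for v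
    have "x = (\<Sum>v\<in>V \<union> W. (if v \<in> V then c v else 0) *\<^sub>R v)"
      using V(1,4) W(1) by (simp add: sum_extend)
    moreover have "y = (\<Sum>v\<in>V \<union> W. (if v \<in> W then d v else 0) *\<^sub>R v)"
      using W(1,4) V(1) by (simp add: sum_extend)
    ultimately have "x + y = (\<Sum>v\<in>V \<union> W. e v *\<^sub>R v)"
      by (simp add: e_def scaleR_add_left sum.distrib)
    moreover have "\<forall>v\<in>V \<union> W. e v \<ge> 0" using V(3) W(3) by (auto simp: e_def)
    ultimately show "x + y \<in> pos S" unfolding pos_def using V(1,2) W(1,2)
      by (intro CollectI exI[of _ "V \<union> W"] exI[of _ e]) auto
  next
    fix x and c :: real assume "x \<in> pos S" "0 \<le> c"
    then obtain V d where V: "finite V" "V \<subseteq> S" "\<forall>v\<in>V. d v \<ge> 0" "x = (\<Sum>v\<in>V. d v *\<^sub>R v)"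
      unfolding pos_def by auto
    have "c *\<^sub>R x = (\<Sum>v\<in>V. (c * d v) *\<^sub>R v)" using V(4) by (simp add: scaleR_sum_right)
    moreover have "\<forall>v\<in>V. c * d v \<ge> 0" using V(3) \<open>0 \<le> c\<close> by auto
    ultimately show "c *\<^sub>R x \<in> pos S" unfolding pos_def using V(1,2)
      by (intro CollectI exI[of _ V] exI[of _ "\<lambda>v. c * d v"]) auto
  qed
  moreover have "S \<subseteq> pos S"
  proof
    fix v assume "v \<in> S"
    then show "v \<in> pos S" unfolding pos_def
      by (intro CollectI exI[of _ "{v}"] exI[of _ "\<lambda>_. 1::real"]) auto
  qed
  ultimately show "convex_cone hull S \<subseteq> pos S" by (rule hull_minimal[rotated])
qed

lemma cone_hull_finite_explicit:
  fixes V :: "(real^3) set"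
  assumes "finite V"
  shows "convex_cone hull V = {\<Sum>v\<in>V. c v *\<^sub>R v | c. \<forall>v\<in>V. 0 \<le> c v}"
proof
  show "convex_cone hull V \<subseteq> {\<Sum>v\<in>V. c v *\<^sub>R v | c. \<forall>v\<in>V. 0 \<le> c v}"
  proof
    fix x assume "x \<in> convex_cone hull V"
    then have "x \<in> pos V" by (simp add: pos_eq)
    then obtain W c where W: "finite W" "W \<subseteq> V" "\<forall>v\<in>W. c v \<ge> 0" "x = (\<Sum>v\<in>W. c v *\<^sub>R v)"
      unfolding pos_def by auto
    define d where "d v = (if v \<in> W then c v else 0)" for v
    have "x = (\<Sum>v\<in>V. d v *\<^sub>R v)"
      using W assms unfolding d_def by (simp add: sum_extend)
    moreover have "\<forall>v\<in>V. 0 \<le> d v" using W by (auto simp: d_def)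
    ultimately show "x \<in> {\<Sum>v\<in>V. c v *\<^sub>R v | c. \<forall>v\<in>V. 0 \<le> c v}" by blast
  qed
next
  show "{\<Sum>v\<in>V. c v *\<^sub>R v | c. \<forall>v\<in>V. 0 \<le> c v} \<subseteq> convex_cone hull V"
    unfolding pos_eq[symmetric] pos_def using assms by blast
qed

lemma cone_hull_convex_hull: "convex_cone hull (convex hull S) = convex_cone hull S"
proof
  show "convex_cone hull (convex hull S) \<subseteq> convex_cone hull S"
    by (simp add: convex_hull_subset_convex_cone_hull hull_minimal convex_cone_convex_cone_hull)
  show "convex_cone hull S \<subseteq> convex_cone hull (convex hull S)"
    by (simp add: hull_mono hull_subset)
qed


locale ctx =
  fixes \<sigma> :: "(real^3) set" and G :: "(real^3) set"
  assumes finG: "finite G" and GN: "G \<subseteq> latN" and G0: "0 \<notin> G"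
    and sigG: "\<sigma> = convex_cone hull G"
    and strong: "\<sigma> \<inter> uminus ` \<sigma> \<subseteq> {0}"
begin

definition "PP = convex hull (\<sigma> \<inter> (latN - {0}))"

lemma cc_sig: "convex_cone \<sigma>" by (simp add: sigG convex_cone_convex_cone_hull)
lemma convex_sig: "convex \<sigma>" using cc_sig by (simp add: convex_cone_def)
lemma sig_add: "x \<in> \<sigma> \<Longrightarrow> y \<in> \<sigma> \<Longrightarrow> x + y \<in> \<sigma>" using cc_sig by (simp add: convex_cone_add)
lemma sig_scale: "x \<in> \<sigma> \<Longrightarrow> 0 \<le> c \<Longrightarrow> c *\<^sub>R x \<in> \<sigma>" using cc_sig by (simp add: convex_cone_iff)
lemma sig_0: "0 \<in> \<sigma>" using cc_sig by (simp add: convex_cone_iff)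
lemma G_sig: "G \<subseteq> \<sigma>" by (simp add: sigG hull_subset)
lemma closed_sig: "closed \<sigma>" by (simp add: sigG closed_convex_cone_hull finG)

lemma strong0: "a \<in> \<sigma> \<Longrightarrow> b \<in> \<sigma> \<Longrightarrow> a + b = 0 \<Longrightarrow> a = 0"
proof -
  assume "a \<in> \<sigma>" "b \<in> \<sigma>" "a + b = 0"
  then have "a = - b" by (simp add: eq_neg_iff_add_eq_0)
  then have "a \<in> uminus ` \<sigma>" using \<open>b \<in> \<sigma>\<close> by auto
  then show "a = 0" using strong \<open>a \<in> \<sigma>\<close> by auto
qed

lemma sig_repr: "x \<in> \<sigma> \<Longrightarrow> \<exists>c. (\<forall>g\<in>G. 0 \<le> c g) \<and> x = (\<Sum>g\<in>G. c g *\<^sub>R g)"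
  using cone_hull_finite_explicit[OF finG] sigG by auto

lemma sig_sum: "(\<forall>g\<in>G. 0 \<le> c g) \<Longrightarrow> (\<Sum>g\<in>G. c g *\<^sub>R g) \<in> \<sigma>"
  using cone_hull_finite_explicit[OF finG] sigG by auto

lemma PP_sub: "PP \<subseteq> \<sigma>"
  unfolding PP_def by (rule hull_minimal) (auto simp: convex_sig)

lemma convex_PP: "convex PP" unfolding PP_def by simp

lemma latpt_PP: "x \<in> \<sigma> \<Longrightarrow> x \<in> latN \<Longrightarrow> x \<noteq> 0 \<Longrightarrow> x \<in> PP"
  unfolding PP_def by (rule hull_inc) auto

lemma zero_notin_PP: "0 \<notin> PP"
proof
  assume "0 \<in> PP"
  then obtain S u where S: "finite S" "S \<subseteq> \<sigma> \<inter> (latN - {0})" "\<forall>x\<in>S. 0 \<le> u x"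
    "sum u S = 1" "(\<Sum>v\<in>S. u v *\<^sub>R v) = 0"
    unfolding PP_def convex_hull_explicit by auto
  have "\<exists>v0\<in>S. u v0 > 0"
  proof (rule ccontr)
    assume "\<not> ?thesis"
    then have "\<forall>x\<in>S. u x \<le> 0" by auto
    then have "sum u S \<le> 0" by (simp add: sum_nonpos)
    then show False using S(4) by simp
  qed
  then obtain v0 where v0: "v0 \<in> S" "u v0 > 0" by blast
  have e1: "(\<Sum>v\<in>S. u v *\<^sub>R v) = u v0 *\<^sub>R v0 + (\<Sum>v\<in>S - {v0}. u v *\<^sub>R v)"
    using S(1) v0(1) by (simp add: sum.remove)
  have h1: "u v0 *\<^sub>R v0 \<in> \<sigma>" using v0 S(2,3) by (auto intro: sig_scale)
  have h2: "(\<Sum>v\<in>S - {v0}. u v *\<^sub>R v) \<in> \<sigma>"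
  proof -
    have "(\<Sum>v\<in>Tt. u v *\<^sub>R v) \<in> \<sigma>" if "Tt \<subseteq> S" for Tt
    proof -
      have "finite Tt" using S(1) that finite_subset by blast
      then show ?thesis using that
      proof (induction Tt rule: finite_induct)
        case empty then show ?case by (simp add: sig_0)
      next
        case (insert x F) then show ?case using S(2,3) by (auto intro!: sig_add sig_scale)
      qed
    qed
    then show ?thesis by auto
  qed
  have "u v0 *\<^sub>R v0 + (\<Sum>v\<in>S - {v0}. u v *\<^sub>R v) = 0" using e1 S(5) by simp
  then have "u v0 *\<^sub>R v0 = 0" by (rule strong0[OF h1 h2])
  then show False using v0 S(2) by auto
qed

lemma step_lat: assumes "q \<in> \<sigma>" "q \<in> latN" "q \<noteq> 0" "g \<in> G" "0 \<le> c"
  shows "q + c *\<^sub>R g \<in> PP"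
proof -
  define n where "n = \<lfloor>c\<rfloor>"
  define th where "th = c - of_int n"
  have n0: "0 \<le> n" using assms(5) by (simp add: n_def)
  have th: "0 \<le> th" "th \<le> 1" unfolding th_def n_def by linarith+
  have gN: "g \<in> latN" using assms(4) GN by auto
  have gs: "g \<in> \<sigma>" using assms(4) G_sig by auto
  have mem: "q + of_int m *\<^sub>R g \<in> PP" if "0 \<le> m" for m
  proof (rule latpt_PP)
    show "q + of_int m *\<^sub>R g \<in> \<sigma>" using that by (intro sig_add sig_scale assms gs) auto
    show "q + of_int m *\<^sub>R g \<in> latN" by (intro latN_add latN_int_scale assms gN)
    show "q + of_int m *\<^sub>R g \<noteq> 0"
    proof
      assume "q + of_int m *\<^sub>R g = 0"
      then have "q = 0" using strong0[of q "of_int m *\<^sub>R g"] assms(1) that gs sig_scale by auto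
      then show False using assms(3) by simp
    qed
  qed
  have "q + c *\<^sub>R g = (1 - th) *\<^sub>R (q + of_int n *\<^sub>R g) + th *\<^sub>R (q + of_int (n+1) *\<^sub>R g)"
    unfolding th_def by (simp add: algebra_simps)
  also have "\<dots> \<in> PP"
    using convex_PP mem[of n] mem[of "n+1"] n0 th by (intro convexD) auto
  finally show ?thesis .
qed

lemma PP_add_G: assumes "p \<in> PP" "g \<in> G" "0 \<le> c" shows "p + c *\<^sub>R g \<in> PP"
proof -
  have "convex hull ((\<lambda>x. c *\<^sub>R g + x) ` (\<sigma> \<inter> (latN - {0}))) \<subseteq> PP"
    by (rule hull_minimal) (auto simp: convex_PP add.commute intro!: step_lat assms)
  then have "(\<lambda>x. c *\<^sub>R g + x) ` PP \<subseteq> PP"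
    unfolding PP_def convex_hull_translation .
  then show ?thesis using assms(1) by (auto simp: add.commute)
qed

lemma PP_add_sig: assumes "p \<in> PP" "v \<in> \<sigma>" shows "p + v \<in> PP"
proof -
  obtain c where c: "\<forall>g\<in>G. 0 \<le> c g" "v = (\<Sum>g\<in>G. c g *\<^sub>R g)" using sig_repr assms(2) by blast
  have "\<forall>p\<in>PP. p + (\<Sum>g\<in>H. c g *\<^sub>R g) \<in> PP" if "H \<subseteq> G" for H
  proof -
    have "finite H" using that finG finite_subset by blast
    then show ?thesis using that
    proof (induction H rule: finite_induct)
      case empty then show ?case by simp
    next
      case (insert x F)
      show ?case
      proof
        fix p assume "p \<in> PP"
        then have "p + c x *\<^sub>R x \<in> PP" using insert c(1) by (intro PP_add_G) auto
        then have "(p + c x *\<^sub>R x) + (\<Sum>g\<in>F. c g *\<^sub>R g) \<in> PP" using insert by auto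
        then show "p + (\<Sum>g\<in>insert x F. c g *\<^sub>R g) \<in> PP" using insert by (simp add: add.assoc)
      qed
    qed
  qed
  then show ?thesis using assms(1) c(2) by blast
qed

lemma PP_scale: assumes "p \<in> PP" "1 \<le> t" shows "t *\<^sub>R p \<in> PP"
proof -
  have "(t - 1) *\<^sub>R p \<in> \<sigma>" using assms PP_sub by (intro sig_scale) auto
  then have "p + (t - 1) *\<^sub>R p \<in> PP" by (rule PP_add_sig[OF assms(1)])
  then show ?thesis by (simp add: algebra_simps)
qed

lemma RL: assumes "F face_of PP" "bounded F" "y \<in> PP" "y \<noteq> 0" "1 < t" "t *\<^sub>R y \<in> F"
  shows False
proof -
  obtain B where B: "\<And>x. x \<in> F \<Longrightarrow> norm x \<le> B" using assms(2) bounded_iff by blast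
  have ny: "norm y > 0" using assms(4) by simp
  define T where "T = max (t + 1) ((\<bar>B\<bar> + 1) / norm y)"
  have T: "T > t" "T \<ge> 1" using assms(5) by (auto simp: T_def)
  have "T *\<^sub>R y \<in> PP" using PP_scale assms(3) T by auto
  moreover have "t *\<^sub>R y \<in> open_segment y (T *\<^sub>R y)"
    unfolding in_segment
  proof
    show "y \<noteq> T *\<^sub>R y"
    proof
      assume h: "y = T *\<^sub>R y"
      have "1 * norm y = T * norm y" using arg_cong[OF h, of norm] T(2) by simp
      then have "norm y = 0 \<or> 1 = T" by (simp only: mult_cancel_right)
      then show False using ny T(1) assms(5) by auto
    qed
    define u where "u = (t - 1) / (T - 1)"
    have u: "0 < u" "u < 1" using assms(5) T unfolding u_def by (auto simp: divide_less_eq_1_pos)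
    have "u * (T - 1) = t - 1" unfolding u_def using T(1) assms(5) by simp
    then have "u * T - u = t - 1" by (simp add: right_diff_distrib)
    then have "(1 - u) + u * T = t" by linarith
    then have "t *\<^sub>R y = (1 - u) *\<^sub>R y + u *\<^sub>R T *\<^sub>R y" by (metis scaleR_add_left scaleR_scaleR)
    then show "\<exists>u>0. u < 1 \<and> t *\<^sub>R y = (1 - u) *\<^sub>R y + u *\<^sub>R T *\<^sub>R y" using u by blast
  qed
  ultimately have "T *\<^sub>R y \<in> F" using face_ofD[OF assms(1)] assms(3,6) by blast
  then have "T * norm y \<le> B" using B T by fastforce
  moreover have "T * norm y \<ge> \<bar>B\<bar> + 1"
  proof -
    have "(\<bar>B\<bar> + 1) / norm y \<le> T" by (simp add: T_def)
    then show ?thesis using pos_divide_le_eq[OF ny] by simp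
  qed
  ultimately show False by linarith
qed

end


lemma linear_pair0: "linear (\<lambda>x::'a::real_vector. (x, 0::real))"
  by (auto simp: linear_iff)

lemma polyhedron_sum:
  fixes K G :: "(real^3) set"
  assumes "finite K" "finite G"
  shows "polyhedron (\<Union>v\<in>convex_cone hull G. \<Union>k\<in>convex hull K. {v + k})"
proof -
  define R where "R = (\<Union>v\<in>convex_cone hull G. \<Union>k\<in>convex hull K. {v + k})"
  define Q where "Q = convex_cone hull ((K \<times> {1::real}) \<union> (G \<times> {0}))"
  define H where "H = {w::(real^3) \<times> real. (0, 1) \<bullet> w = 1}"
  define \<phi> where "\<phi> = (\<lambda>z::real^3. (z, 1::real))"
  have "polyhedron Q" unfolding Q_def using assms by (intro polyhedron_convex_cone_hull) auto
  then have polQH: "polyhedron (Q \<inter> H)" unfolding H_def by (intro polyhedron_Int polyhedron_hyperplane)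
  have G0: "G \<times> {0::real} = (\<lambda>x. (x, 0)) ` G" by auto
  have ccG: "convex_cone hull (G \<times> {0::real}) = (\<lambda>x. (x, 0)) ` (convex_cone hull G)"
    unfolding G0 by (rule convex_cone_hull_linear_image[OF linear_pair0])
  have chK: "convex hull (K \<times> {1::real}) = (convex hull K) \<times> {1}"
    by (simp add: convex_hull_Times)
  have QH: "Q \<inter> H = \<phi> ` R"
  proof
    show "Q \<inter> H \<subseteq> \<phi> ` R"
    proof
      fix w assume w: "w \<in> Q \<inter> H"
      then obtain x y where xy: "x \<in> convex_cone hull (K \<times> {1})" "y \<in> convex_cone hull (G \<times> {0})" "w = x + y"
        unfolding Q_def convex_cone_hull_Un by blast
      obtain v where v: "v \<in> convex_cone hull G" "y = (v, 0)" using xy(2) ccG by auto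
      have sw: "snd w = 1" using w unfolding H_def by (cases w) auto
      have "x \<noteq> 0" using sw xy(3) v(2) by auto
      then have "x \<in> (\<Union>p\<in>convex hull (K \<times> {1}). \<Union>c\<in>{0..}. {c *\<^sub>R p})"
        using xy(1) unfolding convex_cone_hull_convex_hull by blast
      then obtain p c where pc: "p \<in> convex hull (K \<times> {1})" "c \<ge> 0" "x = c *\<^sub>R p"
        by blast
      obtain k where k: "k \<in> convex hull K" "p = (k, 1)"
      proof -
        have "p \<in> (convex hull K) \<times> {1}" using pc(1) chK by simp
        then have "fst p \<in> convex hull K \<and> snd p = 1" by (simp add: mem_Times_iff)
        then have "fst p \<in> convex hull K" "snd p = 1" by auto
        then show ?thesis using that[of "fst p"] by (cases p) auto
      qed
      have "c = 1" using sw xy(3) v(2) pc(3) k(2) by simp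
      then have "w = \<phi> (v + k)" using xy(3) v(2) pc(3) k(2) by (simp add: \<phi>_def add.commute)
      then show "w \<in> \<phi> ` R" unfolding R_def using v(1) k(1) by blast
    qed
  next
    show "\<phi> ` R \<subseteq> Q \<inter> H"
    proof
      fix w assume "w \<in> \<phi> ` R"
      then obtain v k where vk: "v \<in> convex_cone hull G" "k \<in> convex hull K" "w = (v + k, 1)"
        unfolding R_def \<phi>_def by auto
      have "(k, 1) \<in> convex_cone hull (K \<times> {1::real})"
        using vk(2) chK convex_hull_subset_convex_cone_hull by blast
      moreover have "(v, 0) \<in> convex_cone hull (G \<times> {0::real})" using vk(1) ccG by auto
      ultimately have "(k, 1) + (v, 0) \<in> Q"
        unfolding Q_def convex_cone_hull_Un by blast
      moreover have "w = (k, 1) + (v, 0)" using vk(3) by (simp add: add.commute)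
      ultimately show "w \<in> Q \<inter> H" unfolding H_def by simp
    qed
  qed
  have closedR: "closed R" unfolding R_def
    using assms by (intro closed_compact_sums closed_convex_cone_hull compact_convex_hull finite_imp_compact)
  have convexR: "convex R" unfolding R_def
    by (intro convex_sums convex_convex_hull convex_convex_cone_hull)
  define L where "L = (\<lambda>x::real^3. (x, 0::real))"
  have linL: "linear L" unfolding L_def by (rule linear_pair0)
  have injL: "inj L" unfolding L_def by (auto simp: inj_on_def)
  have phiL: "\<phi> ` S = (+) (0, 1) ` (L ` S)" for S
    unfolding \<phi>_def L_def by (auto simp: image_image)
  have "{F. F face_of R} \<subseteq> (\<lambda>F'. \<phi> -` F') ` {F'. F' face_of (Q \<inter> H)}"
  proof
    fix F assume "F \<in> {F. F face_of R}"
    then have "F face_of R" by simp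
    then have "L ` F face_of L ` R" using face_of_linear_image[OF linL injL] by blast
    then have "\<phi> ` F face_of \<phi> ` R" unfolding phiL by simp
    moreover have "F = \<phi> -` (\<phi> ` F)" unfolding \<phi>_def by auto
    ultimately show "F \<in> (\<lambda>F'. \<phi> -` F') ` {F'. F' face_of (Q \<inter> H)}" unfolding QH by blast
  qed
  moreover have "finite {F'. F' face_of (Q \<inter> H)}" using polQH by (rule finite_polyhedron_faces)
  ultimately have "finite {F. F face_of R}" by (meson finite_imageI finite_subset)
  then show ?thesis using closedR convexR polyhedron_eq_finite_faces unfolding R_def by blast
qed


context ctx begin

definition "KK = {x \<in> latN - {0}. \<exists>c. (\<forall>g\<in>G. 0 \<le> c g \<and> c g \<le> 1) \<and> x = (\<Sum>g\<in>G. c g *\<^sub>R g)}"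

lemma finite_KK: "finite KK"
proof -
  define B where "B = (\<Sum>g\<in>G. norm g)"
  have "KK \<subseteq> cball 0 B \<inter> latN"
  proof
    fix x assume "x \<in> KK"
    then obtain c where c: "x \<in> latN" "\<forall>g\<in>G. 0 \<le> c g \<and> c g \<le> 1" "x = (\<Sum>g\<in>G. c g *\<^sub>R g)"
      unfolding KK_def by auto
    have "norm x \<le> (\<Sum>g\<in>G. norm (c g *\<^sub>R g))" unfolding c(3) by (rule norm_sum)
    also have "\<dots> \<le> B" unfolding B_def
      using c(2) by (intro sum_mono) (auto simp: mult_left_le_one_le)
    finally show "x \<in> cball 0 B \<inter> latN" using c(1) by auto
  qed
  then show ?thesis using finite_bounded_latN[of "cball 0 B"] finite_subset by blast
qed

lemma KK_PP: "KK \<subseteq> PP"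
proof
  fix x assume "x \<in> KK"
  then obtain c where c: "x \<in> latN" "x \<noteq> 0" "\<forall>g\<in>G. 0 \<le> c g \<and> c g \<le> 1" "x = (\<Sum>g\<in>G. c g *\<^sub>R g)"
    unfolding KK_def by auto
  have "x \<in> \<sigma>" using c(3,4) sig_sum by auto
  then show "x \<in> PP" using c latpt_PP by auto
qed

lemma sum_delta_vec: "g \<in> G \<Longrightarrow> (\<Sum>h\<in>G. (if h = g then 1 else 0) *\<^sub>R h) = g"
proof -
  assume "g \<in> G"
  have "(\<Sum>h\<in>G. (if h = g then 1 else 0) *\<^sub>R h) = (\<Sum>h\<in>G. if h = g then g else 0)"
    by (rule sum.cong) auto
  also have "\<dots> = g" using \<open>g \<in> G\<close> finG by simp
  finally show ?thesis .
qed

lemma PP_repr: "PP = (\<Union>v\<in>\<sigma>. \<Union>k\<in>convex hull KK. {v + k})"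
proof
  show "(\<Union>v\<in>\<sigma>. \<Union>k\<in>convex hull KK. {v + k}) \<subseteq> PP"
  proof clarify
    fix v k assume "v \<in> \<sigma>" "k \<in> convex hull KK"
    then have "k \<in> PP" using KK_PP convex_PP hull_minimal by blast
    then show "v + k \<in> PP" using PP_add_sig \<open>v \<in> \<sigma>\<close> by (metis add.commute)
  qed
next
  show "PP \<subseteq> (\<Union>v\<in>\<sigma>. \<Union>k\<in>convex hull KK. {v + k})"
    unfolding PP_def
  proof (rule hull_minimal)
    show "convex (\<Union>v\<in>\<sigma>. \<Union>k\<in>convex hull KK. {v + k})"
      by (intro convex_sums convex_sig convex_convex_hull)
    show "\<sigma> \<inter> (latN - {0}) \<subseteq> (\<Union>v\<in>\<sigma>. \<Union>k\<in>convex hull KK. {v + k})"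
    proof
      fix x assume x: "x \<in> \<sigma> \<inter> (latN - {0})"
      obtain c where c: "\<forall>g\<in>G. 0 \<le> c g" "x = (\<Sum>g\<in>G. c g *\<^sub>R g)" using sig_repr x by blast
      show "x \<in> (\<Union>v\<in>\<sigma>. \<Union>k\<in>convex hull KK. {v + k})"
      proof (cases "\<exists>g\<in>G. c g \<ge> 1")
        case True
        then obtain g where g: "g \<in> G" "c g \<ge> 1" by blast
        define d where "d h = c h - (if h = g then 1 else 0)" for h
        have "(\<Sum>h\<in>G. d h *\<^sub>R h) = x - g"
          unfolding d_def c(2) using sum_delta_vec[OF g(1)]
          by (simp add: scaleR_diff_left sum_subtractf)
        moreover have "\<forall>h\<in>G. 0 \<le> d h" using c(1) g(2) by (auto simp: d_def)
        ultimately have "x - g \<in> \<sigma>" using sig_sum by metis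
        moreover have "g \<in> KK"
        proof -
          have "g \<in> latN" "g \<noteq> 0" using g(1) GN G0 by auto
          moreover have "g = (\<Sum>h\<in>G. (if h = g then 1 else 0) *\<^sub>R h)" using sum_delta_vec[OF g(1)] by simp
          ultimately show ?thesis unfolding KK_def
            by (intro CollectI conjI exI[of _ "\<lambda>h. if h = g then 1 else 0"]) auto
        qed
        then have "g \<in> convex hull KK" by (rule hull_inc)
        ultimately show ?thesis by (intro UN_I[of "x - g"] UN_I[of g]) auto
      next
        case False
        then have "\<forall>g\<in>G. 0 \<le> c g \<and> c g \<le> 1" using c(1) by (auto simp: not_le intro: less_imp_le)
        then have "x \<in> KK" unfolding KK_def using x c(2) by blast
        then have "x \<in> convex hull KK" by (rule hull_inc)
        then show ?thesis using sig_0 by (intro UN_I[of 0] UN_I[of x]) auto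
      qed
    qed
  qed
qed

lemma polyhedron_PP: "polyhedron PP"
  unfolding PP_repr using polyhedron_sum[OF finite_KK finG] sigG by simp

lemma closed_PP: "closed PP" by (rule polyhedron_imp_closed[OF polyhedron_PP])

lemma large_multiple: assumes "x \<in> \<sigma>" "x \<noteq> 0" shows "\<exists>t>0. t *\<^sub>R x \<in> PP"
proof -
  obtain c where c: "\<forall>g\<in>G. 0 \<le> c g" "x = (\<Sum>g\<in>G. c g *\<^sub>R g)" using sig_repr assms(1) by blast
  obtain g where g: "g \<in> G" "c g > 0"
  proof (rule ccontr)
    assume "\<not> thesis"
    then have "\<forall>g\<in>G. c g = 0" using c(1) that by force
    then have "x = 0" using c(2) by simp
    then show False using assms(2) by simp
  qed
  define t where "t = 1 / c g"
  have t: "t > 0" "t * c g = 1" using g(2) by (auto simp: t_def)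
  define d where "d h = t * c h - (if h = g then 1 else 0)" for h
  have "(\<Sum>h\<in>G. d h *\<^sub>R h) = t *\<^sub>R x - g"
    unfolding d_def c(2) using sum_delta_vec[OF g(1)]
    by (simp add: scaleR_diff_left sum_subtractf scaleR_sum_right)
  moreover have "\<forall>h\<in>G. 0 \<le> d h" using c(1) t by (auto simp: d_def)
  ultimately have "t *\<^sub>R x - g \<in> \<sigma>" using sig_sum by metis
  moreover have "g \<in> PP" using g(1) GN G0 G_sig by (intro latpt_PP) auto
  ultimately have "g + (t *\<^sub>R x - g) \<in> PP" using PP_add_sig by blast
  then show ?thesis using t(1) by (intro exI[of _ t]) auto
qed

end


context ctx begin

lemma covering: assumes "x \<in> \<sigma>" "x \<noteq> 0"
  shows "\<exists>C t. C facet_of PP \<and> compact C \<and> 0 < t \<and> t *\<^sub>R x \<in> C"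
proof -
  obtain t1 where t1: "t1 > 0" "t1 *\<^sub>R x \<in> PP" using large_multiple assms by blast
  define I where "I = {t. 0 \<le> t \<and> t *\<^sub>R x \<in> PP}"
  have "I = {0..} \<inter> (\<lambda>t. t *\<^sub>R x) -` PP" unfolding I_def by auto
  moreover have "closed ((\<lambda>t. t *\<^sub>R x) -` PP)"
    by (rule continuous_closed_vimage[OF closed_PP]) (intro continuous_intros)
  ultimately have clI: "closed I" by (simp add: closed_Int)
  have neI: "I \<noteq> {}" using t1 unfolding I_def by (auto intro!: exI[of _ t1])
  have bdI: "bdd_below I" unfolding I_def by (rule bdd_belowI[of _ 0]) auto
  define t0 where "t0 = Inf I"
  have t0I: "t0 \<in> I" unfolding t0_def using closed_contains_Inf neI bdI clI by blast
  have lower: "t0 \<le> t" if "t \<in> I" for t unfolding t0_def using cInf_lower that bdI by blast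
  have t0pos: "t0 > 0"
  proof -
    have "t0 \<ge> 0" "t0 *\<^sub>R x \<in> PP" using t0I unfolding I_def by auto
    moreover have "t0 \<noteq> 0" using zero_notin_PP calculation(2) by auto
    ultimately show ?thesis by simp
  qed
  define y where "y = t0 *\<^sub>R x"
  have yPP: "y \<in> PP" using t0I unfolding I_def y_def by auto
  have y0: "y \<noteq> 0" using t0pos assms(2) unfolding y_def by simp
  obtain Fs where Fs: "finite Fs" and seq: "PP = affine hull PP \<inter> \<Inter>Fs"
    and faces: "\<forall>h\<in>Fs. \<exists>a b. a \<noteq> 0 \<and> h = {x. a \<bullet> x \<le> b}"
    and psub: "\<And>F'. F' \<subset> Fs \<Longrightarrow> PP \<subset> affine hull PP \<inter> \<Inter>F'"
    using polyhedron_PP unfolding polyhedron_Int_affine_minimal by metis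
  obtain a b where ab: "\<And>h. h \<in> Fs \<Longrightarrow> a h \<noteq> 0 \<and> h = {x. a h \<bullet> x \<le> b h}"
    using faces by metis
  have memh: "(z \<in> h) = (a h \<bullet> z \<le> b h)" if "h \<in> Fs" for h z
  proof -
    have "h = {x. a h \<bullet> x \<le> b h}" using ab[OF that] by blast
    then show ?thesis by (metis (no_types, lifting) mem_Collect_eq)
  qed
  have PPh: "\<And>h w. h \<in> Fs \<Longrightarrow> w \<in> PP \<Longrightarrow> a h \<bullet> w \<le> b h"
    using seq ab by blast
  have "\<exists>h\<in>Fs. a h \<bullet> y = b h \<and> b h < 0"
  proof (rule ccontr)
    assume neg: "\<not> (\<exists>h\<in>Fs. a h \<bullet> y = b h \<and> b h < 0)"
    define F1 where "F1 = {h\<in>Fs. a h \<bullet> y < b h}"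
    define U where "U = (\<Inter>h\<in>F1. {z. a h \<bullet> z < b h})"
    have "open U" unfolding U_def F1_def using Fs by (intro open_INT) (auto simp: open_halfspace_lt)
    moreover have "y \<in> U" unfolding U_def F1_def by auto
    ultimately obtain e where e: "e > 0" "ball y e \<subseteq> U" using open_contains_ball by blast
    define \<epsilon> where "\<epsilon> = min (1/2) (e / (2 * (norm y + 1)))"
    have "e / (2 * (norm y + 1)) > 0" using e(1) norm_ge_zero[of y] by (intro divide_pos_pos) (linarith, smt (verit))
    then have eps: "0 < \<epsilon>" "\<epsilon> < 1" by (auto simp: \<epsilon>_def)
    define z where "z = (1 - \<epsilon>) *\<^sub>R y"
    have "\<epsilon> * norm y < e"
    proof -
      have "\<epsilon> * norm y \<le> (e / (2 * (norm y + 1))) * norm y"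
        by (intro mult_right_mono) (auto simp: \<epsilon>_def)
      also have "\<dots> < e"
      proof -
        have d: "0 < 2 * (norm y + 1)" by (smt (verit) norm_ge_zero)
        have "norm y < 2 * (norm y + 1)" using norm_ge_zero[of y] by (smt (verit))
        then have "norm y < 1 * (2 * (norm y + 1))" by simp
        then have q: "norm y / (2 * (norm y + 1)) < 1" using pos_divide_less_eq[OF d] by blast
        have "e * (norm y / (2 * (norm y + 1))) < e * 1" by (rule mult_strict_left_mono[OF q e(1)])
        then show ?thesis by simp
      qed
      finally show ?thesis .
    qed
    then have "dist y z < e" unfolding z_def dist_norm using eps
      by (simp add: algebra_simps)
    then have zU: "z \<in> U" using e(2) by auto
    have "(2::real) *\<^sub>R y \<in> PP" using PP_scale yPP by simp
    then have "(2::real) *\<^sub>R y + (-1) *\<^sub>R ((2::real) *\<^sub>R y) \<in> affine hull PP"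
      using yPP by (intro mem_affine[OF affine_affine_hull]) (auto simp: hull_inc)
    then have 0: "0 \<in> affine hull PP" by simp
    have "(1 - \<epsilon>) *\<^sub>R y + \<epsilon> *\<^sub>R 0 \<in> affine hull PP"
      using yPP 0 by (intro mem_affine[OF affine_affine_hull]) (auto simp: hull_inc)
    then have zaff: "z \<in> affine hull PP" unfolding z_def by simp
    have "z \<in> h" if "h \<in> Fs" for h
    proof (cases "h \<in> F1")
      case True
      then have "a h \<bullet> z < b h" using zU unfolding U_def by blast
      then show ?thesis using memh[OF that] by simp
    next
      case False
      then have "a h \<bullet> y = b h" using PPh[OF that yPP] that unfolding F1_def by auto
      moreover then have "b h \<ge> 0" using neg that by auto
      ultimately have "a h \<bullet> z \<le> b h" unfolding z_def using eps
        by (simp add: mult_left_le_one_le)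
      then show ?thesis using memh[OF that] by simp
    qed
    then have "z \<in> PP" using zaff seq by blast
    then have "(1 - \<epsilon>) * t0 \<in> I" unfolding I_def z_def y_def using eps t0pos by auto
    then have "t0 \<le> (1 - \<epsilon>) * t0" by (rule lower)
    moreover have "\<epsilon> * t0 > 0" using eps t0pos by simp
    ultimately show False by (simp add: algebra_simps)
  qed
  then obtain h where h: "h \<in> Fs" "a h \<bullet> y = b h" "b h < 0" by blast
  define C where "C = PP \<inter> {z. a h \<bullet> z = b h}"
  have facet: "C facet_of PP"
    unfolding C_def using facet_of_polyhedron_explicit[OF Fs seq ab psub] h(1) by blast
  have sub: "C \<subseteq> convex hull KK"
  proof
    fix z assume z: "z \<in> C"
    then obtain v k where vk: "v \<in> \<sigma>" "k \<in> convex hull KK" "z = v + k"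
      unfolding C_def using PP_repr by auto
    have kPP: "k \<in> PP" using vk(2) KK_PP convex_PP hull_minimal by blast
    have ak: "a h \<bullet> k \<le> b h" using PPh[OF h(1) kPP] .
    have av: "a h \<bullet> v \<le> 0"
    proof (rule ccontr)
      assume "\<not> a h \<bullet> v \<le> 0"
      then have avp: "a h \<bullet> v > 0" by simp
      define n where "n = (\<bar>b h - a h \<bullet> k\<bar> + 1) / (a h \<bullet> v)"
      have n0: "n \<ge> 0" unfolding n_def using avp by simp
      have "k + n *\<^sub>R v \<in> PP" using PP_add_sig[OF kPP] sig_scale[OF vk(1) n0] by blast
      then have "a h \<bullet> (k + n *\<^sub>R v) \<le> b h" by (rule PPh[OF h(1)])
      moreover have "a h \<bullet> (k + n *\<^sub>R v) = a h \<bullet> k + \<bar>b h - a h \<bullet> k\<bar> + 1"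
        unfolding n_def using avp by (simp add: inner_add_right)
      ultimately show False by linarith
    qed
    have "a h \<bullet> z = b h" using z unfolding C_def by auto
    then have av0: "a h \<bullet> v = 0" using ak av vk(3) by (simp add: inner_add_right)
    obtain c where c: "\<forall>g\<in>G. 0 \<le> c g" "v = (\<Sum>g\<in>G. c g *\<^sub>R g)" using sig_repr vk(1) by blast
    have ag: "a h \<bullet> g < 0" if "g \<in> G" for g
    proof -
      have "g \<in> PP" using that GN G0 G_sig by (intro latpt_PP) auto
      then show ?thesis using PPh[OF h(1)] h(3) by fastforce
    qed
    have "(\<Sum>g\<in>G. - (c g * (a h \<bullet> g))) = 0"
      using av0 unfolding c(2) by (simp add: inner_sum_right sum_negf)
    moreover have nn: "0 \<le> - (c g * (a h \<bullet> g))" if "g \<in> G" for g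
      using c(1) ag[OF that] that by (simp add: mult_nonneg_nonpos less_imp_le)
    ultimately have "\<forall>g\<in>G. - (c g * (a h \<bullet> g)) = 0"
      using sum_nonneg_eq_0_iff[OF finG nn] by (simp only:)
    then have "\<forall>g\<in>G. c g = 0"
    proof (intro ballI)
      fix g assume "\<forall>g\<in>G. - (c g * (a h \<bullet> g)) = 0" "g \<in> G"
      then have "c g * (a h \<bullet> g) = 0" by simp
      then show "c g = 0" using ag[OF \<open>g \<in> G\<close>] by simp
    qed
    then have "v = 0" using c(2) by simp
    then show "z \<in> convex hull KK" using vk by simp
  qed
  have "compact C" unfolding compact_eq_bounded_closed
  proof
    show "bounded C" using sub compact_imp_bounded[OF compact_convex_hull[OF finite_imp_compact[OF finite_KK]]]
      bounded_subset by blast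
    show "closed C" unfolding C_def by (intro closed_Int closed_PP closed_hyperplane)
  qed
  moreover have "y \<in> C" unfolding C_def using yPP h(2) by auto
  ultimately show ?thesis using facet t0pos unfolding y_def by blast
qed

end


lemma coeff3_unique:
  fixes a b c :: "real^3"
  assumes ind: "independent {a, b, c}" and d: "a \<noteq> b" "a \<noteq> c" "b \<noteq> c"
    and eq: "\<alpha> *\<^sub>R a + \<beta> *\<^sub>R b + \<gamma> *\<^sub>R c = 0"
  shows "\<alpha> = 0 \<and> \<beta> = 0 \<and> \<gamma> = 0"
proof -
  define f where "f v = (if v = a then \<alpha> else if v = b then \<beta> else \<gamma>)" for v
  have "(\<Sum>v\<in>{a, b, c}. f v *\<^sub>R v) = 0" using d eq by (simp add: f_def add.assoc)
  then have "\<forall>v\<in>{a, b, c}. f v = 0" using ind unfolding independent_explicit by blast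
  then show ?thesis using d by (auto simp: f_def)
qed

lemma coeff3_unique2:
  fixes a b c :: "real^3"
  assumes ind: "independent {a, b, c}" and d: "a \<noteq> b" "a \<noteq> c" "b \<noteq> c"
    and eq: "\<alpha> *\<^sub>R a + \<beta> *\<^sub>R b + \<gamma> *\<^sub>R c = \<alpha>' *\<^sub>R a + \<beta>' *\<^sub>R b + \<gamma>' *\<^sub>R c"
  shows "\<alpha> = \<alpha>' \<and> \<beta> = \<beta>' \<and> \<gamma> = \<gamma>'"
proof -
  have "(\<alpha> - \<alpha>') *\<^sub>R a + (\<beta> - \<beta>') *\<^sub>R b + (\<gamma> - \<gamma>') *\<^sub>R c = 0"
    using eq by (simp add: algebra_simps)
  then have "\<alpha> - \<alpha>' = 0 \<and> \<beta> - \<beta>' = 0 \<and> \<gamma> - \<gamma>' = 0" by (rule coeff3_unique[OF ind d])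
  then show ?thesis by simp
qed

context ctx begin

lemma Hlb_prim: assumes "x \<in> Hlb \<sigma>" "0 < t" "t < 1" "t *\<^sub>R x \<in> latN" shows False
proof -
  have x: "x \<in> \<sigma>" "x \<in> latN" "x \<noteq> 0" using assms(1) unfolding Hlb_def by auto
  have "t *\<^sub>R x \<in> \<sigma>" "(1 - t) *\<^sub>R x \<in> \<sigma>" using x assms by (auto intro!: sig_scale)
  moreover have "(1 - t) *\<^sub>R x \<in> latN"
    using latN_diff[OF x(2) assms(4)] by (simp add: algebra_simps)
  moreover have "t *\<^sub>R x \<noteq> 0" "(1 - t) *\<^sub>R x \<noteq> 0" using x assms by auto
  moreover have "x = t *\<^sub>R x + (1 - t) *\<^sub>R x" by (simp add: algebra_simps)
  ultimately show False using assms(1,4) unfolding Hlb_def by blast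
qed

lemma finite_Hlb: "finite (Hlb \<sigma>)"
proof -
  have "Hlb \<sigma> \<subseteq> G \<union> KK"
  proof
    fix x assume xH: "x \<in> Hlb \<sigma>"
    then have x: "x \<in> \<sigma>" "x \<in> latN" "x \<noteq> 0" unfolding Hlb_def by auto
    obtain c where c: "\<forall>g\<in>G. 0 \<le> c g" "x = (\<Sum>g\<in>G. c g *\<^sub>R g)" using sig_repr x by blast
    show "x \<in> G \<union> KK"
    proof (cases "\<exists>g\<in>G. c g \<ge> 1")
      case True
      then obtain g where g: "g \<in> G" "c g \<ge> 1" by blast
      define d where "d h = c h - (if h = g then 1 else 0)" for h
      have "(\<Sum>h\<in>G. d h *\<^sub>R h) = x - g"
        unfolding d_def c(2) using sum_delta_vec[OF g(1)]
        by (simp add: scaleR_diff_left sum_subtractf)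
      moreover have "\<forall>h\<in>G. 0 \<le> d h" using c(1) g(2) by (auto simp: d_def)
      ultimately have xg: "x - g \<in> \<sigma>" using sig_sum by metis
      have gg: "g \<in> \<sigma>" "g \<in> latN" "g \<noteq> 0" using g(1) GN G0 G_sig by auto
      have "x - g = 0"
      proof (rule ccontr)
        assume "x - g \<noteq> 0"
        moreover have "x - g \<in> latN" using x(2) gg(2) by (rule latN_diff)
        moreover have "x = g + (x - g)" by simp
        ultimately show False using xH xg gg unfolding Hlb_def by blast
      qed
      then show ?thesis using g(1) by simp
    next
      case False
      then have "\<forall>g\<in>G. 0 \<le> c g \<and> c g \<le> 1" using c(1) by (auto simp: not_le intro: less_imp_le)
      then have "x \<in> KK" unfolding KK_def using x c(2) by blast
      then show ?thesis by simp
    qed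
  qed
  then show ?thesis by (rule finite_subset) (simp add: finG finite_KK)
qed

end

locale tri = ctx +
  fixes a b c :: "real^3" and F :: "(real^3) set"
  assumes abcN: "a \<in> latN" "b \<in> latN" "c \<in> latN"
    and dist: "a \<noteq> b" "a \<noteq> c" "b \<noteq> c"
    and aind: "\<not> affine_dependent {a, b, c}"
    and latfree: "convex hull {a, b, c} \<inter> latN = {a, b, c}"
    and sF: "convex hull {a, b, c} \<subseteq> F"
    and Fface: "F face_of PP" and Fbd: "bounded F"
begin

lemma s_PP: "convex hull {a, b, c} \<subseteq> PP" using sF Fface face_of_imp_subset by blast

lemma abc_PP: "a \<in> PP" "b \<in> PP" "c \<in> PP"
proof -
  have "{a, b, c} \<subseteq> convex hull {a, b, c}" by (rule hull_subset)
  then show "a \<in> PP" "b \<in> PP" "c \<in> PP" using s_PP by auto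
qed

lemma abc_sig: "a \<in> \<sigma>" "b \<in> \<sigma>" "c \<in> \<sigma>" using abc_PP PP_sub by auto

lemma comb_sig: "0 \<le> \<alpha> \<Longrightarrow> 0 \<le> \<beta> \<Longrightarrow> 0 \<le> \<gamma> \<Longrightarrow> \<alpha> *\<^sub>R a + \<beta> *\<^sub>R b + \<gamma> *\<^sub>R c \<in> \<sigma>"
  using abc_sig by (intro sig_add sig_scale) auto

lemma comb_lat: "x \<in> latN \<Longrightarrow> x = \<alpha> *\<^sub>R a + \<beta> *\<^sub>R b + \<gamma> *\<^sub>R c \<Longrightarrow>
  a + b + c - x = (1 - \<alpha>) *\<^sub>R a + (1 - \<beta>) *\<^sub>R b + (1 - \<gamma>) *\<^sub>R c \<and> a + b + c - x \<in> latN"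
  using abcN by (auto simp: algebra_simps intro!: latN_add latN_diff)

lemma in_s: "0 \<le> \<alpha> \<Longrightarrow> 0 \<le> \<beta> \<Longrightarrow> 0 \<le> \<gamma> \<Longrightarrow> \<alpha> + \<beta> + \<gamma> = 1 \<Longrightarrow>
   \<alpha> *\<^sub>R a + \<beta> *\<^sub>R b + \<gamma> *\<^sub>R c \<in> convex hull {a, b, c}"
  unfolding convex_hull_3 by blast

lemma below: assumes "w \<in> PP" "w = \<alpha> *\<^sub>R a + \<beta> *\<^sub>R b + \<gamma> *\<^sub>R c" "0 \<le> \<alpha>" "0 \<le> \<beta>" "0 \<le> \<gamma>"
  shows "\<alpha> + \<beta> + \<gamma> \<ge> 1"
proof (rule ccontr)
  assume "\<not> ?thesis"
  then have m1: "\<alpha> + \<beta> + \<gamma> < 1" by simp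
  define m where "m = \<alpha> + \<beta> + \<gamma>"
  have w0: "w \<noteq> 0" using assms(1) zero_notin_PP by auto
  have m0: "m > 0"
  proof (rule ccontr)
    assume "\<not> m > 0"
    then have "\<alpha> = 0" "\<beta> = 0" "\<gamma> = 0" using assms(3-5) unfolding m_def by auto
    then show False using w0 assms(2) by simp
  qed
  have "(1 / m) *\<^sub>R w = (\<alpha> / m) *\<^sub>R a + (\<beta> / m) *\<^sub>R b + (\<gamma> / m) *\<^sub>R c"
    using assms(2) by (simp add: algebra_simps)
  also have "\<dots> \<in> convex hull {a, b, c}"
    using m0 assms(3-5) by (intro in_s) (auto simp: m_def add_divide_distrib[symmetric])
  finally have wF: "(1 / m) *\<^sub>R w \<in> F" using sF by blast
  have m1': "m < 1" using m1 by (simp add: m_def)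
  have "1 < 1 / m" using m0 m1' by (simp add: field_simps)
  then show False using RL[OF Fface Fbd assms(1) w0] wF by blast
qed

lemma indep: "independent {a, b, c}"
proof (rule ccontr)
  assume "\<not> independent {a, b, c}"
  then obtain u where u: "\<exists>v\<in>{a, b, c}. u v \<noteq> 0" "(\<Sum>v\<in>{a, b, c}. u v *\<^sub>R v) = 0"
    using dependent_finite[of "{a, b, c}"] by auto
  have sum3: "u a *\<^sub>R a + u b *\<^sub>R b + u c *\<^sub>R c = 0" using u(2) dist by (simp add: add.assoc)
  define S where "S = u a + u b + u c"
  have "S \<noteq> 0"
  proof
    assume "S = 0"
    then have "sum u {a, b, c} = 0" using dist by (simp add: S_def)
    then have "affine_dependent {a, b, c}"
      using u affine_dependent_explicit_finite[of "{a, b, c}"] by auto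
    then show False using aind by simp
  qed
  define \<alpha> \<beta> \<gamma> where "\<alpha> = u a / S" and "\<beta> = u b / S" and "\<gamma> = u c / S"
  have sum1: "\<alpha> + \<beta> + \<gamma> = 1" using \<open>S \<noteq> 0\<close> unfolding \<alpha>_def \<beta>_def \<gamma>_def S_def
    by (simp add: add_divide_distrib[symmetric])
  have zero: "\<alpha> *\<^sub>R a + \<beta> *\<^sub>R b + \<gamma> *\<^sub>R c = 0"
  proof -
    have "\<alpha> *\<^sub>R a + \<beta> *\<^sub>R b + \<gamma> *\<^sub>R c = (1 / S) *\<^sub>R (u a *\<^sub>R a + u b *\<^sub>R b + u c *\<^sub>R c)"
      unfolding \<alpha>_def \<beta>_def \<gamma>_def by (simp add: algebra_simps)
    then show ?thesis using sum3 by simp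
  qed
  define y where "y = (1/3) *\<^sub>R a + (1/3) *\<^sub>R b + (1/3) *\<^sub>R c"
  have ys: "y \<in> convex hull {a, b, c}" unfolding y_def by (intro in_s) auto
  then have yPP: "y \<in> PP" using s_PP by auto
  have y0: "y \<noteq> 0" using yPP zero_notin_PP by auto
  define A where "A = \<bar>\<alpha>\<bar> + \<bar>\<beta>\<bar> + \<bar>\<gamma>\<bar>"
  have A0: "0 \<le> A" unfolding A_def by simp
  define \<epsilon> where "\<epsilon> = 1 / (3 * A + 3)"
  have eps: "\<epsilon> > 0" unfolding \<epsilon>_def using A0 by simp
  have e3: "\<epsilon> * (3 * A + 3) = 1" unfolding \<epsilon>_def using A0 by simp
  then have e3': "3 * (\<epsilon> * A) + 3 * \<epsilon> = 1" by (simp add: algebra_simps)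
  have "\<epsilon> * \<alpha> \<le> \<epsilon> * \<bar>\<alpha>\<bar>" "\<epsilon> * \<beta> \<le> \<epsilon> * \<bar>\<beta>\<bar>" "\<epsilon> * \<gamma> \<le> \<epsilon> * \<bar>\<gamma>\<bar>"
    using eps by (auto intro!: mult_left_mono)
  moreover have "\<epsilon> * \<bar>\<alpha>\<bar> \<le> \<epsilon> * A" "\<epsilon> * \<bar>\<beta>\<bar> \<le> \<epsilon> * A" "\<epsilon> * \<bar>\<gamma>\<bar> \<le> \<epsilon> * A"
    using eps unfolding A_def by (auto intro!: mult_left_mono)
  ultimately have epsb: "\<epsilon> * \<alpha> \<le> 1/3 - \<epsilon>" "\<epsilon> * \<beta> \<le> 1/3 - \<epsilon>" "\<epsilon> * \<gamma> \<le> 1/3 - \<epsilon>"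
    using e3' by linarith+
  have "(1 + \<epsilon>) *\<^sub>R y = ((1 + \<epsilon>) / 3 - \<epsilon> * \<alpha>) *\<^sub>R a + ((1 + \<epsilon>) / 3 - \<epsilon> * \<beta>) *\<^sub>R b
      + ((1 + \<epsilon>) / 3 - \<epsilon> * \<gamma>) *\<^sub>R c"
  proof -
    have "((1 + \<epsilon>) / 3 - \<epsilon> * \<alpha>) *\<^sub>R a + ((1 + \<epsilon>) / 3 - \<epsilon> * \<beta>) *\<^sub>R b
      + ((1 + \<epsilon>) / 3 - \<epsilon> * \<gamma>) *\<^sub>R c = (1 + \<epsilon>) *\<^sub>R y - \<epsilon> *\<^sub>R (\<alpha> *\<^sub>R a + \<beta> *\<^sub>R b + \<gamma> *\<^sub>R c)"
      unfolding y_def by (simp add: algebra_simps)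
    then show ?thesis using zero by simp
  qed
  also have "\<dots> \<in> convex hull {a, b, c}"
  proof (rule in_s)
    show "0 \<le> (1 + \<epsilon>) / 3 - \<epsilon> * \<alpha>" using epsb(1) eps unfolding add_divide_distrib by linarith
    show "0 \<le> (1 + \<epsilon>) / 3 - \<epsilon> * \<beta>" using epsb(2) eps unfolding add_divide_distrib by linarith
    show "0 \<le> (1 + \<epsilon>) / 3 - \<epsilon> * \<gamma>" using epsb(3) eps unfolding add_divide_distrib by linarith
    have "\<epsilon> * \<alpha> + \<epsilon> * \<beta> + \<epsilon> * \<gamma> = \<epsilon>" using sum1 by (simp add: distrib_left[symmetric])
    then show "(1 + \<epsilon>) / 3 - \<epsilon> * \<alpha> + ((1 + \<epsilon>) / 3 - \<epsilon> * \<beta>) + ((1 + \<epsilon>) / 3 - \<epsilon> * \<gamma>) = 1"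
      unfolding add_divide_distrib by linarith
  qed
  finally have yF: "(1 + \<epsilon>) *\<^sub>R y \<in> F" using sF by blast
  have "1 < 1 + \<epsilon>" using eps by simp
  then show False using RL[OF Fface Fbd yPP y0] yF by blast
qed

lemma uniq: "\<alpha> *\<^sub>R a + \<beta> *\<^sub>R b + \<gamma> *\<^sub>R c = \<alpha>' *\<^sub>R a + \<beta>' *\<^sub>R b + \<gamma>' *\<^sub>R c \<Longrightarrow>
  \<alpha> = \<alpha>' \<and> \<beta> = \<beta>' \<and> \<gamma> = \<gamma>'"
  using coeff3_unique2[OF indep dist] by blast

lemma vert_eq: assumes "\<alpha> *\<^sub>R a + \<beta> *\<^sub>R b + \<gamma> *\<^sub>R c \<in> {a, b, c}"
  shows "(\<alpha> = 1 \<and> \<beta> = 0 \<and> \<gamma> = 0) \<or> (\<alpha> = 0 \<and> \<beta> = 1 \<and> \<gamma> = 0) \<or> (\<alpha> = 0 \<and> \<beta> = 0 \<and> \<gamma> = 1)"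
proof -
  have "\<alpha> *\<^sub>R a + \<beta> *\<^sub>R b + \<gamma> *\<^sub>R c = a \<or> \<alpha> *\<^sub>R a + \<beta> *\<^sub>R b + \<gamma> *\<^sub>R c = b \<or>
    \<alpha> *\<^sub>R a + \<beta> *\<^sub>R b + \<gamma> *\<^sub>R c = c" using assms by blast
  then show ?thesis
  proof (elim disjE)
    assume "\<alpha> *\<^sub>R a + \<beta> *\<^sub>R b + \<gamma> *\<^sub>R c = a"
    then have "\<alpha> *\<^sub>R a + \<beta> *\<^sub>R b + \<gamma> *\<^sub>R c = 1 *\<^sub>R a + 0 *\<^sub>R b + 0 *\<^sub>R c" by simp
    then show ?thesis by (drule_tac uniq) simp
  next
    assume "\<alpha> *\<^sub>R a + \<beta> *\<^sub>R b + \<gamma> *\<^sub>R c = b"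
    then have "\<alpha> *\<^sub>R a + \<beta> *\<^sub>R b + \<gamma> *\<^sub>R c = 0 *\<^sub>R a + 1 *\<^sub>R b + 0 *\<^sub>R c" by simp
    then show ?thesis by (drule_tac uniq) simp
  next
    assume "\<alpha> *\<^sub>R a + \<beta> *\<^sub>R b + \<gamma> *\<^sub>R c = c"
    then have "\<alpha> *\<^sub>R a + \<beta> *\<^sub>R b + \<gamma> *\<^sub>R c = 0 *\<^sub>R a + 0 *\<^sub>R b + 1 *\<^sub>R c" by simp
    then show ?thesis by (drule_tac uniq) simp
  qed
qed

end


context tri begin

lemma par_zero:
  assumes HF: "\<And>x. x \<in> Hlb \<sigma> \<Longrightarrow> \<exists>F'. F' face_of PP \<and> bounded F' \<and> x \<in> F'"
    and x: "x \<in> latN" "x = \<alpha> *\<^sub>R a + \<beta> *\<^sub>R b + \<gamma> *\<^sub>R c"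
    and co: "0 \<le> \<alpha>" "\<alpha> < 1" "0 \<le> \<beta>" "\<beta> < 1" "0 \<le> \<gamma>" "\<gamma> < 1"
  shows "x = 0"
proof (rule ccontr)
  assume x0: "x \<noteq> 0"
  have xs: "x \<in> \<sigma>" using x(2) co comb_sig by auto
  have xPP: "x \<in> PP" using xs x(1) x0 by (rule latpt_PP)
  define x' where "x' = a + b + c - x"
  have x': "x' = (1 - \<alpha>) *\<^sub>R a + (1 - \<beta>) *\<^sub>R b + (1 - \<gamma>) *\<^sub>R c" "x' \<in> latN"
    using comb_lat[OF x] unfolding x'_def by auto
  have x's: "x' \<in> \<sigma>" using x'(1) co comb_sig by auto
  have x'0: "x' \<noteq> 0"
  proof
    assume "x' = 0"
    then have "(1 - \<alpha>) *\<^sub>R a + (1 - \<beta>) *\<^sub>R b + (1 - \<gamma>) *\<^sub>R c = 0 *\<^sub>R a + 0 *\<^sub>R b + 0 *\<^sub>R c"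
      using x'(1) by simp
    then have "1 - \<alpha> = 0 \<and> 1 - \<beta> = 0 \<and> 1 - \<gamma> = 0" by (rule uniq)
    then show False using co by simp
  qed
  have x'PP: "x' \<in> PP" using x's x'(2) x'0 by (rule latpt_PP)
  have m1: "\<alpha> + \<beta> + \<gamma> \<ge> 1" using below[OF xPP x(2)] co by auto
  have m2: "(1 - \<alpha>) + (1 - \<beta>) + (1 - \<gamma>) \<ge> 1" using below[OF x'PP x'(1)] co by auto
  show False
  proof (cases "\<alpha> + \<beta> + \<gamma> = 1")
    case True
    then have "x \<in> convex hull {a, b, c}" using x(2) co by (auto intro: in_s)
    then have "x \<in> {a, b, c}" using latfree x(1) by auto
    then show False using vert_eq x(2) co by auto
  next
    case ne1: False
    show False
    proof (cases "\<alpha> + \<beta> + \<gamma> = 2")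
      case True
      then have "(1 - \<alpha>) + (1 - \<beta>) + (1 - \<gamma>) = 1" by simp
      then have "(1 - \<alpha>) *\<^sub>R a + (1 - \<beta>) *\<^sub>R b + (1 - \<gamma>) *\<^sub>R c \<in> convex hull {a, b, c}"
        using co by (intro in_s) auto
      then have "x' \<in> convex hull {a, b, c}" using x'(1) by simp
      then have "x' \<in> {a, b, c}" using latfree x'(2) by auto
      then show False using vert_eq[of "1 - \<alpha>" "1 - \<beta>" "1 - \<gamma>"] x'(1) co by auto
    next
      case ne2: False
      define m where "m = \<alpha> + \<beta> + \<gamma>"
      have m: "1 < m" "m < 2" using m1 m2 ne1 ne2 unfolding m_def by auto
      have xH: "x \<in> Hlb \<sigma>"
        unfolding Hlb_def
      proof (intro CollectI conjI)
        show "x \<in> \<sigma> \<inter> latN - {0}" using xs x(1) x0 by auto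
        show "\<not> (\<exists>p\<in>\<sigma> \<inter> latN - {0}. \<exists>q\<in>\<sigma> \<inter> latN - {0}. x = p + q)"
        proof
          assume "\<exists>p\<in>\<sigma> \<inter> latN - {0}. \<exists>q\<in>\<sigma> \<inter> latN - {0}. x = p + q"
          then obtain p q where pq: "p \<in> PP" "q \<in> PP" "x = p + q" using latpt_PP by blast
          define w where "w = (1/2) *\<^sub>R p + (1/2) *\<^sub>R q"
          have wPP: "w \<in> PP" unfolding w_def using convex_PP pq by (intro convexD) auto
          have "w = (1/2) *\<^sub>R x" unfolding w_def pq(3) by (simp add: scaleR_add_right)
          also have "\<dots> = (\<alpha>/2) *\<^sub>R a + (\<beta>/2) *\<^sub>R b + (\<gamma>/2) *\<^sub>R c"
            unfolding x(2) by (simp add: scaleR_add_right)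
          finally have "w = (\<alpha>/2) *\<^sub>R a + (\<beta>/2) *\<^sub>R b + (\<gamma>/2) *\<^sub>R c" .
          then have "\<alpha>/2 + \<beta>/2 + \<gamma>/2 \<ge> 1" using below[OF wPP] co by auto
          then show False using m unfolding m_def by simp
        qed
      qed
      obtain F' where F': "F' face_of PP" "bounded F'" "x \<in> F'" using HF[OF xH] by blast
      define y where "y = (1/m) *\<^sub>R x"
      have "y = (\<alpha>/m) *\<^sub>R a + (\<beta>/m) *\<^sub>R b + (\<gamma>/m) *\<^sub>R c" unfolding y_def x(2)
        by (simp add: algebra_simps)
      also have "\<dots> \<in> convex hull {a, b, c}" using m co
        by (intro in_s) (auto simp: m_def add_divide_distrib[symmetric])
      finally have yPP: "y \<in> PP" using s_PP by auto
      have y0: "y \<noteq> 0" using x0 m unfolding y_def by simp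
      have "m *\<^sub>R y = x" unfolding y_def using m by simp
      then have "m *\<^sub>R y \<in> F'" using F'(3) by simp
      then show False using RL[OF F'(1,2) yPP y0] m(1) by blast
    qed
  qed
qed

lemma Zbasis:
  assumes HF: "\<And>x. x \<in> Hlb \<sigma> \<Longrightarrow> \<exists>F'. F' face_of PP \<and> bounded F' \<and> x \<in> F'"
  shows "Z_basis {a, b, c}"
  unfolding Z_basis_def
proof (intro conjI ballI)
  show "{a, b, c} \<subseteq> latN" using abcN by auto
  show "independent {a, b, c}" by (rule indep)
  fix x assume xN: "x \<in> latN"
  have "card {a, b, c} = dim (UNIV :: (real^3) set)" using dist by simp
  then have "UNIV \<subseteq> span {a, b, c}" using card_eq_dim[of "{a, b, c}" UNIV] indep by simp
  then have "x \<in> range (\<lambda>u. \<Sum>v\<in>{a, b, c}. u v *\<^sub>R v)" using span_finite[of "{a, b, c}"] by auto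
  then obtain u where u0: "x = (\<Sum>v\<in>{a, b, c}. u v *\<^sub>R v)" by (rule rangeE)
  then have u: "(\<Sum>v\<in>{a, b, c}. u v *\<^sub>R v) = x" by simp
  have x3: "x = u a *\<^sub>R a + u b *\<^sub>R b + u c *\<^sub>R c" using u dist by (simp add: add.assoc)
  define x0 where "x0 = x - (of_int \<lfloor>u a\<rfloor> *\<^sub>R a + of_int \<lfloor>u b\<rfloor> *\<^sub>R b + of_int \<lfloor>u c\<rfloor> *\<^sub>R c)"
  have "x0 \<in> latN" unfolding x0_def using xN abcN by (intro latN_diff latN_add latN_int_scale)
  moreover have "x0 = (u a - of_int \<lfloor>u a\<rfloor>) *\<^sub>R a + (u b - of_int \<lfloor>u b\<rfloor>) *\<^sub>R b + (u c - of_int \<lfloor>u c\<rfloor>) *\<^sub>R c"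
    unfolding x0_def x3 by (simp add: algebra_simps)
  moreover have fl: "0 \<le> r - of_int \<lfloor>r\<rfloor>" "r - of_int \<lfloor>r\<rfloor> < 1" for r :: real
    using frac_ge_0[of r] frac_lt_1[of r] by (simp_all add: frac_def)
  ultimately have "x0 = 0" using par_zero[OF HF] by blast
  then have xe: "x = of_int \<lfloor>u a\<rfloor> *\<^sub>R a + of_int \<lfloor>u b\<rfloor> *\<^sub>R b + of_int \<lfloor>u c\<rfloor> *\<^sub>R c"
    unfolding x0_def by simp
  define cf where "cf v = (if v = a then \<lfloor>u a\<rfloor> else if v = b then \<lfloor>u b\<rfloor> else \<lfloor>u c\<rfloor>)" for v
  have "x = (\<Sum>v\<in>{a, b, c}. of_int (cf v) *\<^sub>R v)" using xe dist by (simp add: cf_def add.assoc)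
  moreover have "finite {a, b, c}" "{a, b, c} \<subseteq> {a, b, c}" by auto
  ultimately show "\<exists>cf B'. finite B' \<and> B' \<subseteq> {a, b, c} \<and> x = (\<Sum>v\<in>B'. of_int (cf v) *\<^sub>R v)"
    by (intro exI[of _ cf] exI[of _ "{a, b, c}"] conjI)
qed

end


lemma indep_unique:
  fixes V :: "(real^3) set"
  assumes "independent V" "(\<Sum>v\<in>V. c v *\<^sub>R v) = (\<Sum>v\<in>V. d v *\<^sub>R v)"
  shows "\<forall>v\<in>V. c v = d v"
proof -
  have eq0: "(\<Sum>v\<in>V. (c v - d v) *\<^sub>R v) = 0" using assms(2)
    by (simp add: scaleR_diff_left sum_subtractf)
  have H: "\<forall>c. (\<Sum>v\<in>V. c v *\<^sub>R v) = 0 \<longrightarrow> (\<forall>v\<in>V. c v = 0)"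
    using assms(1) unfolding independent_explicit by blast
  have "v \<in> V \<Longrightarrow> c v - d v = 0" for v by (rule H[rule_format, OF eq0])
  then show ?thesis by simp
qed

lemma cone_face:
  fixes V W :: "(real^3) set"
  assumes ind: "independent V" and WV: "W \<subseteq> V"
  shows "convex_cone hull W face_of convex_cone hull V"
proof -
  have fV: "finite V" using ind independent_explicit by blast
  have fW: "finite W" using fV WV finite_subset by blast
  show ?thesis unfolding face_of_def
  proof (intro conjI ballI impI)
    show "convex_cone hull W \<subseteq> convex_cone hull V" using WV by (rule hull_mono)
    show "convex (convex_cone hull W)" by (rule convex_convex_cone_hull)
    fix p q x assume p: "p \<in> convex_cone hull V" and q: "q \<in> convex_cone hull V"
      and x: "x \<in> convex_cone hull W" and xs: "x \<in> open_segment p q"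
    obtain cp where cp: "\<forall>v\<in>V. 0 \<le> cp v" "p = (\<Sum>v\<in>V. cp v *\<^sub>R v)"
      using p cone_hull_finite_explicit[OF fV] by auto
    obtain cq where cq: "\<forall>v\<in>V. 0 \<le> cq v" "q = (\<Sum>v\<in>V. cq v *\<^sub>R v)"
      using q cone_hull_finite_explicit[OF fV] by auto
    obtain cx where cx: "\<forall>v\<in>W. 0 \<le> cx v" "x = (\<Sum>v\<in>W. cx v *\<^sub>R v)"
      using x cone_hull_finite_explicit[OF fW] by auto
    obtain u where u: "0 < u" "u < 1" "x = (1 - u) *\<^sub>R p + u *\<^sub>R q"
      using xs unfolding in_segment by blast
    have x1: "x = (\<Sum>v\<in>V. (if v \<in> W then cx v else 0) *\<^sub>R v)"
      using cx(2) sum_extend[OF fV WV] by simp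
    have x2: "x = (\<Sum>v\<in>V. ((1 - u) * cp v + u * cq v) *\<^sub>R v)"
      using u(3) cp(2) cq(2)
      by (simp add: scaleR_add_left sum.distrib scaleR_sum_right)
    have "(\<Sum>v\<in>V. (if v \<in> W then cx v else 0) *\<^sub>R v) = (\<Sum>v\<in>V. ((1 - u) * cp v + u * cq v) *\<^sub>R v)"
      using x1 x2 by simp
    then have co: "\<forall>v\<in>V. (if v \<in> W then cx v else 0) = (1 - u) * cp v + u * cq v"
      by (rule indep_unique[OF ind])
    have z: "cp v = 0 \<and> cq v = 0" if "v \<in> V" "v \<notin> W" for v
    proof -
      have "(1 - u) * cp v + u * cq v = 0" using co that by auto
      moreover have "(1 - u) * cp v \<ge> 0" "u * cq v \<ge> 0" using cp(1) cq(1) that u by auto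
      ultimately have "(1 - u) * cp v = 0" "u * cq v = 0" by linarith+
      then show ?thesis using u by auto
    qed
    have "(\<Sum>v\<in>V. cp v *\<^sub>R v) = (\<Sum>v\<in>W. cp v *\<^sub>R v)"
      using z fV WV by (intro sum.mono_neutral_right) auto
    then have "p = (\<Sum>v\<in>W. cp v *\<^sub>R v)" using cp(2) by simp
    then show "p \<in> convex_cone hull W" using cp(1) WV cone_hull_finite_explicit[OF fW] by auto
    have "(\<Sum>v\<in>V. cq v *\<^sub>R v) = (\<Sum>v\<in>W. cq v *\<^sub>R v)"
      using z fV WV by (intro sum.mono_neutral_right) auto
    then have "q = (\<Sum>v\<in>W. cq v *\<^sub>R v)" using cq(2) by simp
    then show "q \<in> convex_cone hull W" using cq(1) WV cone_hull_finite_explicit[OF fW] by auto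
  qed
qed

lemma oneD:
  fixes p q p' q' z :: "real^3"
  assumes pq: "p \<noteq> q" "p' \<noteq> q'" and aff: "p' \<in> affine hull {p, q}" "q' \<in> affine hull {p, q}"
    and lat: "p \<in> latN" "q \<in> latN" "p' \<in> latN" "q' \<in> latN"
    and free: "open_segment p q \<inter> latN = {}" "open_segment p' q' \<inter> latN = {}"
    and z: "z \<in> open_segment p q" "z \<in> open_segment p' q'"
  shows "{p', q'} = {p, q}"
proof -
  define d where "d = q - p"
  have d0: "d \<noteq> 0" using pq(1) unfolding d_def by simp
  define pt where "pt l = p + l *\<^sub>R d" for l
  have ptinj: "l1 = l2" if "pt l1 = pt l2" for l1 l2
    using that d0 unfolding pt_def by simp
  have onaff: "\<exists>l. r = pt l" if H: "r \<in> affine hull {p, q}" for r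
  proof -
    obtain u v where "r = u *\<^sub>R p + v *\<^sub>R q" "u + v = 1" using H unfolding affine_hull_2 by blast
    then have "r = (1 - v) *\<^sub>R p + v *\<^sub>R q" by (simp add: eq_diff_eq)
    then have "r = pt v" unfolding pt_def d_def by (simp add: algebra_simps)
    then show ?thesis by blast
  qed
  obtain l1 where l1: "p' = pt l1" using onaff[OF aff(1)] by blast
  obtain l2 where l2: "q' = pt l2" using onaff[OF aff(2)] by blast
  have l12: "l1 \<noteq> l2" using pq(2) l1 l2 by auto
  have seg1: "pt l \<in> open_segment p q" if "0 < l" "l < 1" for l
    unfolding in_segment using pq(1) that
    by (intro conjI exI[of _ l]) (auto simp: pt_def d_def algebra_simps)
  have seg2: "pt l \<in> open_segment p' q'" if "min l1 l2 < l" "l < max l1 l2" for l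
  proof -
    define th where "th = (l - l1) / (l2 - l1)"
    have th: "0 < th" "th < 1" using that l12 unfolding th_def
      by (auto simp: zero_less_divide_iff divide_less_eq_1 min_def max_def split: if_splits)
    have "th * (l2 - l1) = l - l1" unfolding th_def using l12 by simp
    then have "l = (1 - th) * l1 + th * l2" by (simp add: algebra_simps)
    then have "pt l = pt ((1 - th) * l1 + th * l2)" by simp
    also have "\<dots> = (1 - th) *\<^sub>R pt l1 + th *\<^sub>R pt l2" unfolding pt_def
      by (simp add: algebra_simps)
    finally have "pt l = (1 - th) *\<^sub>R p' + th *\<^sub>R q'" using l1 l2 by simp
    then show ?thesis unfolding in_segment using pq(2) th by blast
  qed
  obtain mu where mu: "0 < mu" "mu < 1" "z = pt mu"
  proof -
    obtain m where "0 < m" "m < 1" "z = (1 - m) *\<^sub>R p + m *\<^sub>R q" using z(1) unfolding in_segment by blast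
    moreover then have "z = pt m" unfolding pt_def d_def by (simp add: algebra_simps)
    ultimately show ?thesis using that by blast
  qed
  obtain nu where nu: "0 < nu" "nu < 1" "z = (1 - nu) *\<^sub>R p' + nu *\<^sub>R q'"
    using z(2) unfolding in_segment by blast
  have "z = pt ((1 - nu) * l1 + nu * l2)" using nu(3) unfolding l1 l2 pt_def
    by (simp add: algebra_simps)
  then have mueq: "mu = (1 - nu) * l1 + nu * l2" using mu(3) ptinj by metis
  have n1: "\<not> (0 < l1 \<and> l1 < 1)" using seg1[of l1] free(1) lat(3) l1 by blast
  have n2: "\<not> (0 < l2 \<and> l2 < 1)" using seg1[of l2] free(1) lat(4) l2 by blast
  have pt0: "pt 0 = p" "pt 1 = q" unfolding pt_def d_def by simp_all
  have n0: "\<not> (min l1 l2 < 0 \<and> 0 < max l1 l2)" using seg2[of 0] free(2) lat(1) pt0 by auto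
  have n3: "\<not> (min l1 l2 < 1 \<and> 1 < max l1 l2)" using seg2[of 1] free(2) lat(2) pt0 by auto
  show ?thesis
  proof (cases "l1 < l2")
    case True
    have "mu - l1 = nu * (l2 - l1)" using mueq by (simp add: algebra_simps)
    moreover have "nu * (l2 - l1) > 0" using nu True by simp
    ultimately have a1: "l1 < mu" by simp
    have "l2 - mu = (1 - nu) * (l2 - l1)" using mueq by (simp add: algebra_simps)
    moreover have "(1 - nu) * (l2 - l1) > 0" using nu True by simp
    ultimately have a2: "mu < l2" by simp
    have "l1 \<le> 0" using n1 a1 mu by linarith
    moreover have "l2 \<ge> 1" using n2 a2 mu by linarith
    ultimately have "l1 = 0" "l2 = 1" using n0 n3 True by (auto simp: min_def max_def)
    then show ?thesis using l1 l2 pt0 by simp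
  next
    case False
    then have F: "l2 < l1" using l12 by simp
    have "mu - l2 = (1 - nu) * (l1 - l2)" using mueq by (simp add: algebra_simps)
    moreover have "(1 - nu) * (l1 - l2) > 0" using nu F by simp
    ultimately have a1: "l2 < mu" by simp
    have "l1 - mu = nu * (l1 - l2)" using mueq by (simp add: algebra_simps)
    moreover have "nu * (l1 - l2) > 0" using nu F by simp
    ultimately have a2: "mu < l1" by simp
    have "l2 \<le> 0" using n2 a1 mu by linarith
    moreover have "l1 \<ge> 1" using n1 a2 mu by linarith
    ultimately have "l2 = 0" "l1 = 1" using n0 n3 F by (auto simp: min_def max_def)
    then show ?thesis using l1 l2 pt0 by auto
  qed
qed

lemma support:
  fixes V :: "(real^3) set"
  assumes "finite V" "\<not> affine_dependent V" "z \<in> convex hull V"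
  shows "\<exists>W. W \<subseteq> V \<and> W \<noteq> {} \<and> z \<in> rel_interior (convex hull W)"
proof -
  obtain u where u: "\<forall>x\<in>V. 0 \<le> u x" "sum u V = 1" "(\<Sum>x\<in>V. u x *\<^sub>R x) = z"
    using assms(3) unfolding convex_hull_finite[OF assms(1)] by blast
  define W where "W = {v\<in>V. u v > 0}"
  have WV: "W \<subseteq> V" unfolding W_def by auto
  have fW: "finite W" using assms(1) WV finite_subset by blast
  have z0: "\<forall>x\<in>V - W. u x = 0" using u(1) unfolding W_def by force
  have "sum u W = sum u V" using assms(1) WV z0 by (intro sum.mono_neutral_left) auto
  then have sW: "sum u W = 1" using u(2) by simp
  have "(\<Sum>x\<in>W. u x *\<^sub>R x) = (\<Sum>x\<in>V. u x *\<^sub>R x)" using assms(1) WV z0 by (intro sum.mono_neutral_left) auto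
  then have zW: "(\<Sum>x\<in>W. u x *\<^sub>R x) = z" using u(3) by simp
  have "W \<noteq> {}" using sW by auto
  moreover have "\<not> affine_dependent W" using assms(2) WV affine_dependent_subset by blast
  then have "z \<in> rel_interior (convex hull W)"
    unfolding rel_interior_convex_hull_explicit[OF \<open>\<not> affine_dependent W\<close>]
    using sW zW by (auto simp: W_def)
  ultimately show ?thesis using WV by blast
qed


context ctx begin

lemma pos_convex_explicit:
  assumes "convex s"
  shows "convex_cone hull s = insert 0 (\<Union>x\<in>s. \<Union>c\<in>{0..}. {c *\<^sub>R x})"
proof -
  have "convex hull s = s" using assms convex_hull_eq by blast
  then show ?thesis using convex_cone_hull_convex_hull[of s] by simp
qed

lemma radial:
  assumes F: "F face_of PP" "bounded F" and F': "F' face_of PP" "bounded F'"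
    and s: "convex s" "s \<subseteq> F" and s': "convex s'" "s' \<subseteq> F'"
  shows "convex_cone hull s \<inter> convex_cone hull s' \<subseteq> convex_cone hull (s \<inter> s')"
proof
  fix x assume x: "x \<in> convex_cone hull s \<inter> convex_cone hull s'"
  show "x \<in> convex_cone hull (s \<inter> s')"
  proof (cases "x = 0")
    case True then show ?thesis by (simp add: convex_cone_hull_contains_0)
  next
    case False
    obtain y t where y: "y \<in> s" "t \<ge> 0" "x = t *\<^sub>R y"
      using x False pos_convex_explicit[OF s(1)] by auto
    obtain y' t' where y': "y' \<in> s'" "t' \<ge> 0" "x = t' *\<^sub>R y'"
      using x False pos_convex_explicit[OF s'(1)] by auto
    have sPP: "s \<subseteq> PP" "s' \<subseteq> PP" using s s' F F' face_of_imp_subset by blast+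
    have yn: "y \<noteq> 0" "y' \<noteq> 0" using y(1) y'(1) sPP zero_notin_PP by auto
    have "t \<noteq> 0" "t' \<noteq> 0" using y(3) y'(3) False by auto
    then have t0: "t > 0" "t' > 0" using y(2) y'(2) by auto
    have "t = t'"
    proof (rule ccontr)
      assume "t \<noteq> t'"
      then consider "t < t'" | "t' < t" by linarith
      then show False
      proof cases
        case 1
        have "(t' / t) *\<^sub>R y' = (1 / t) *\<^sub>R (t' *\<^sub>R y')" by simp
        also have "\<dots> = (1 / t) *\<^sub>R (t *\<^sub>R y)" using y(3) y'(3) by simp
        also have "\<dots> = y" using t0 by simp
        finally have "(t' / t) *\<^sub>R y' = y" .
        then have "(t' / t) *\<^sub>R y' \<in> F" using y(1) s(2) by auto
        moreover have "1 < t' / t" using 1 t0 by simp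
        ultimately show False using RL[OF F _ yn(2)] y'(1) sPP by blast
      next
        case 2
        have "(t / t') *\<^sub>R y = (1 / t') *\<^sub>R (t *\<^sub>R y)" by simp
        also have "\<dots> = (1 / t') *\<^sub>R (t' *\<^sub>R y')" using y(3) y'(3) by simp
        also have "\<dots> = y'" using t0 by simp
        finally have "(t / t') *\<^sub>R y = y'" .
        then have "(t / t') *\<^sub>R y \<in> F'" using y'(1) s'(2) by auto
        moreover have "1 < t / t'" using 2 t0 by simp
        ultimately show False using RL[OF F' _ yn(1)] y(1) sPP by blast
      qed
    qed
    then have "y = y'" using y(3) y'(3) t0 by simp
    then have "y \<in> s \<inter> s'" using y(1) y'(1) by simp
    then show ?thesis using y(2,3) by (simp add: convex_cone_hull_mul hull_inc)
  qed
qed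

lemma facets_inter_dim:
  assumes "F facet_of PP" "F' facet_of PP" "F \<noteq> F'"
  shows "aff_dim (F \<inter> F') \<le> 1"
proof -
  have Ff: "F face_of PP" "F' face_of PP" using assms facet_of_imp_face_of by blast+
  have I0: "F \<inter> F' face_of PP" using Ff by (rule face_of_Int)
  have I: "F \<inter> F' face_of F" by (rule face_of_subset[OF I0 _ face_of_imp_subset[OF Ff(1)]]) auto
  have "F \<inter> F' \<noteq> F"
  proof
    assume "F \<inter> F' = F"
    then have "F \<subseteq> F'" by blast
    then have "F face_of F'" by (rule face_of_subset[OF Ff(1) _ face_of_imp_subset[OF Ff(2)]])
    then have "aff_dim F < aff_dim F'"
      using face_of_aff_dim_lt[OF face_of_imp_convex[OF Ff(2)]] assms(3) by blast
    moreover have "aff_dim F = aff_dim F'" using assms(1,2) unfolding facet_of_def by simp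
    ultimately show False by simp
  qed
  then have "aff_dim (F \<inter> F') < aff_dim F"
    using face_of_aff_dim_lt[OF face_of_imp_convex[OF Ff(1)] I] by blast
  moreover have "aff_dim F = aff_dim PP - 1" using assms(1) unfolding facet_of_def by simp
  moreover have "aff_dim PP \<le> 3" using aff_dim_le_DIM[of PP] by simp
  ultimately show ?thesis by linarith
qed

lemma free_segment:
  fixes V :: "(real^3) set"
  assumes ind: "\<not> affine_dependent V" and lf: "convex hull V \<inter> latN = V"
    and pq: "p \<in> V" "q \<in> V"
  shows "open_segment p q \<inter> latN = {}"
proof (rule ccontr)
  assume "open_segment p q \<inter> latN \<noteq> {}"
  then obtain x where x: "x \<in> open_segment p q" "x \<in> latN" by blast
  have "closed_segment p q \<subseteq> convex hull V"
    unfolding segment_convex_hull using pq by (intro hull_mono) auto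
  then have "x \<in> V" using x lf open_closed_segment by blast
  moreover have xpq: "x \<noteq> p" "x \<noteq> q" using x(1) by (auto simp: open_segment_def)
  moreover have "x \<in> affine hull {p, q}"
    using x(1) open_closed_segment segment_convex_hull convex_hull_subset_affine_hull by blast
  moreover have "affine hull {p, q} \<subseteq> affine hull (V - {x})"
    using pq xpq by (intro hull_mono) auto
  ultimately have "affine_dependent V" unfolding affine_dependent_def by blast
  then show False using ind by simp
qed

lemma card_le2:
  fixes W :: "(real^3) set"
  assumes "\<not> affine_dependent W" "W \<subseteq> E" "aff_dim E \<le> 1"
  shows "card W \<le> 2"
proof -
  have "of_nat (card W) = aff_dim W + 1" using aff_dim_affine_independent[OF assms(1)] .
  moreover have "aff_dim W \<le> aff_dim E" using assms(2) by (rule aff_dim_subset)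
  ultimately show ?thesis using assms(3) by linarith
qed

lemma inter_tri:
  fixes V V' :: "(real^3) set"
  assumes V: "finite V" "\<not> affine_dependent V" "V \<subseteq> latN" "convex hull V \<inter> latN = V"
    and V': "finite V'" "\<not> affine_dependent V'" "V' \<subseteq> latN" "convex hull V' \<inter> latN = V'"
    and F: "F facet_of PP" "convex hull V \<subseteq> F"
    and F': "F' facet_of PP" "convex hull V' \<subseteq> F'"
    and FF: "F \<noteq> F'"
  shows "convex hull V \<inter> convex hull V' = convex hull (V \<inter> V')"
proof
  show "convex hull (V \<inter> V') \<subseteq> convex hull V \<inter> convex hull V'"
    by (simp add: hull_mono)
next
  have dimE: "aff_dim (F \<inter> F') \<le> 1" using facets_inter_dim[OF F(1) F'(1) FF] .
  have Ff: "F face_of PP" "F' face_of PP" using F(1) F'(1) facet_of_imp_face_of by blast+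
  have FP: "F \<subseteq> PP" "F' \<subseteq> PP" using Ff face_of_imp_subset by blast+
  show "convex hull V \<inter> convex hull V' \<subseteq> convex hull (V \<inter> V')"
  proof
    fix z assume z: "z \<in> convex hull V \<inter> convex hull V'"
    obtain W where W: "W \<subseteq> V" "W \<noteq> {}" "z \<in> rel_interior (convex hull W)"
      using support[OF V(1,2)] z by blast
    obtain W' where W': "W' \<subseteq> V'" "W' \<noteq> {}" "z \<in> rel_interior (convex hull W')"
      using support[OF V'(1,2)] z by blast
    have chW: "convex hull W \<subseteq> convex hull V" "convex hull W' \<subseteq> convex hull V'"
      using W(1) W'(1) by (simp_all add: hull_mono)
    have "convex hull W \<subseteq> F'"
      using subset_of_face_of[OF Ff(2), of "convex hull W"] chW(1) F(2) FP(1) z F'(2) W(3) by blast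
    then have WE: "W \<subseteq> F \<inter> F'" using chW(1) F(2) hull_subset[of W convex] by blast
    have "convex hull W' \<subseteq> F"
      using subset_of_face_of[OF Ff(1), of "convex hull W'"] chW(2) F'(2) FP(2) z F(2) W'(3) by blast
    then have W'E: "W' \<subseteq> F \<inter> F'" using chW(2) F'(2) hull_subset[of W' convex] by blast
    have indW: "\<not> affine_dependent W" "\<not> affine_dependent W'"
      using V(2) V'(2) W(1) W'(1) affine_dependent_subset by blast+
    have fW: "finite W" "finite W'" using V(1) V'(1) W(1) W'(1) finite_subset by blast+
    have c2: "card W \<le> 2" "card W' \<le> 2" using card_le2[OF indW(1) WE dimE] card_le2[OF indW(2) W'E dimE] by auto
    have c1: "card W \<ge> 1" "card W' \<ge> 1" using W(2) W'(2) fW by (auto simp: Suc_le_eq card_gt_0_iff)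
    show "z \<in> convex hull (V \<inter> V')"
    proof (cases "card W = 1")
      case True
      then obtain w where w: "W = {w}" using card_1_singletonE by blast
      then have "z = w" using W(3) by simp
      then have "z \<in> V" "z \<in> latN" using W(1) w V(3) by auto
      moreover then have "z \<in> V'" using z V'(4) by auto
      ultimately show ?thesis by (simp add: hull_inc)
    next
      case n1: False
      show ?thesis
      proof (cases "card W' = 1")
        case True
        then obtain w where w: "W' = {w}" using card_1_singletonE by blast
        then have "z = w" using W'(3) by simp
        then have "z \<in> V'" "z \<in> latN" using W'(1) w V'(3) by auto
        moreover then have "z \<in> V" using z V(4) by auto
        ultimately show ?thesis by (simp add: hull_inc)
      next
        case n1': False
        have "card W = 2" "card W' = 2" using c1 c2 n1 n1' by auto
        then obtain p q p' q' where pq: "W = {p, q}" "p \<noteq> q" and pq': "W' = {p', q'}" "p' \<noteq> q'"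
          unfolding card_2_iff by blast
        have zs: "z \<in> open_segment p q" "z \<in> open_segment p' q'"
          using W(3) W'(3) pq pq' by (simp_all add: segment_convex_hull[symmetric] rel_interior_closed_segment)
        have aff: "r \<in> affine hull {p, q}" if "r \<in> W'" for r
        proof (rule ccontr)
          assume r: "r \<notin> affine hull {p, q}"
          have "\<not> affine_dependent {p, q}" using indW(1) pq(1) by simp
          then have ind3: "\<not> affine_dependent (insert r {p, q})" using r affine_independent_insert by blast
          have "r \<notin> {p, q}" using r hull_subset[of "{p, q}" affine] by blast
          then have "card (insert r {p, q}) = 3" using pq(2) by auto
          moreover have "insert r {p, q} \<subseteq> F \<inter> F'" using WE W'E that pq(1) by auto
          ultimately show False using card_le2[OF ind3 _ dimE] by simp
        qed
        have "{p', q'} = {p, q}"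
        proof (rule oneD[OF pq(2) pq'(2)])
          show "p' \<in> affine hull {p, q}" "q' \<in> affine hull {p, q}" using aff pq' by auto
          show "p \<in> latN" "q \<in> latN" using W(1) pq V(3) by auto
          show "p' \<in> latN" "q' \<in> latN" using W'(1) pq' V'(3) by auto
          show "open_segment p q \<inter> latN = {}" using free_segment[OF V(2) V(4)] W(1) pq by auto
          show "open_segment p' q' \<inter> latN = {}" using free_segment[OF V'(2) V'(4)] W'(1) pq' by auto
          show "z \<in> open_segment p q" "z \<in> open_segment p' q'" using zs by auto
        qed
        then have "W \<subseteq> V \<inter> V'" using W(1) W'(1) pq pq' by auto
        then have "convex hull W \<subseteq> convex hull (V \<inter> V')" by (rule hull_mono)
        then show ?thesis using W(3) rel_interior_subset by blast
      qed
    qed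
  qed
qed

end


lemma cc3:
  fixes a b c :: "real^3"
  assumes d: "a \<noteq> b" "a \<noteq> c" "b \<noteq> c"
  shows "convex_cone hull {a, b, c} = {\<alpha> *\<^sub>R a + \<beta> *\<^sub>R b + \<gamma> *\<^sub>R c | \<alpha> \<beta> \<gamma>. 0 \<le> \<alpha> \<and> 0 \<le> \<beta> \<and> 0 \<le> \<gamma>}"
proof -
  have fin: "finite {a, b, c}" by simp
  show ?thesis
  proof
    show "convex_cone hull {a, b, c} \<subseteq> {\<alpha> *\<^sub>R a + \<beta> *\<^sub>R b + \<gamma> *\<^sub>R c | \<alpha> \<beta> \<gamma>. 0 \<le> \<alpha> \<and> 0 \<le> \<beta> \<and> 0 \<le> \<gamma>}"
    proof
      fix x assume "x \<in> convex_cone hull {a, b, c}"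
      then obtain f where f: "\<forall>v\<in>{a, b, c}. 0 \<le> f v" "x = (\<Sum>v\<in>{a, b, c}. f v *\<^sub>R v)"
        unfolding cone_hull_finite_explicit[OF fin] by blast
      have "x = f a *\<^sub>R a + f b *\<^sub>R b + f c *\<^sub>R c" using f(2) d by (simp add: add.assoc)
      then show "x \<in> {\<alpha> *\<^sub>R a + \<beta> *\<^sub>R b + \<gamma> *\<^sub>R c | \<alpha> \<beta> \<gamma>. 0 \<le> \<alpha> \<and> 0 \<le> \<beta> \<and> 0 \<le> \<gamma>}"
        using f(1) by blast
    qed
    show "{\<alpha> *\<^sub>R a + \<beta> *\<^sub>R b + \<gamma> *\<^sub>R c | \<alpha> \<beta> \<gamma>. 0 \<le> \<alpha> \<and> 0 \<le> \<beta> \<and> 0 \<le> \<gamma>} \<subseteq> convex_cone hull {a, b, c}"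
    proof clarify
      fix \<alpha> \<beta> \<gamma> :: real assume co: "0 \<le> \<alpha>" "0 \<le> \<beta>" "0 \<le> \<gamma>"
      define f where "f v = (if v = a then \<alpha> else if v = b then \<beta> else \<gamma>)" for v
      have "\<alpha> *\<^sub>R a + \<beta> *\<^sub>R b + \<gamma> *\<^sub>R c = (\<Sum>v\<in>{a, b, c}. f v *\<^sub>R v)" using d by (simp add: f_def add.assoc)
      moreover have "\<forall>v\<in>{a, b, c}. 0 \<le> f v" using co by (simp add: f_def)
      ultimately show "\<alpha> *\<^sub>R a + \<beta> *\<^sub>R b + \<gamma> *\<^sub>R c \<in> convex_cone hull {a, b, c}"
        unfolding cone_hull_finite_explicit[OF fin] by blast
    qed
  qed
qed

lemma one_pos_gen:
  fixes a b c v :: "real^3"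
  assumes ind: "independent {a, b, c}" and d: "a \<noteq> b" "a \<noteq> c" "b \<noteq> c"
    and C: "\<And>\<alpha> \<beta> \<gamma>. 0 \<le> \<alpha> \<Longrightarrow> 0 \<le> \<beta> \<Longrightarrow> 0 \<le> \<gamma> \<Longrightarrow> \<alpha> *\<^sub>R a + \<beta> *\<^sub>R b + \<gamma> *\<^sub>R c \<in> C"
    and R: "{t *\<^sub>R v | t. 0 \<le> t} face_of C"
    and v: "v = \<alpha> *\<^sub>R a + \<beta> *\<^sub>R b + \<gamma> *\<^sub>R c" "0 < \<alpha>" "0 \<le> \<beta>" "0 \<le> \<gamma>"
  shows "\<beta> = 0 \<and> \<gamma> = 0"
proof -
  define p1 where "p1 = (2 * \<alpha>) *\<^sub>R a + 0 *\<^sub>R b + 0 *\<^sub>R c"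
  define p2 where "p2 = 0 *\<^sub>R a + (2 * \<beta>) *\<^sub>R b + (2 * \<gamma>) *\<^sub>R c"
  have p1C: "p1 \<in> C" unfolding p1_def by (rule C) (use v in auto)
  have p2C: "p2 \<in> C" unfolding p2_def by (rule C) (use v in auto)
  note p12 = p1C p2C
  have vp: "v = (1 - 1/2) *\<^sub>R p1 + (1/2) *\<^sub>R p2" unfolding p1_def p2_def v(1) by (simp add: algebra_simps)
  show ?thesis
  proof (cases "p1 = p2")
    case True
    then have "2 * \<alpha> = 0" using coeff3_unique2[OF ind d] unfolding p1_def p2_def by blast
    then show ?thesis using v(2) by simp
  next
    case False
    then have "v \<in> open_segment p1 p2" unfolding in_segment using vp
      by (intro conjI exI[of _ "1/2"]) auto
    moreover have "v \<in> {t *\<^sub>R v | t. 0 \<le> t}" by (intro CollectI exI[of _ 1]) simp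
    ultimately have "p1 \<in> {t *\<^sub>R v | t. 0 \<le> t}" using face_ofD[OF R] p12 by blast
    then obtain t where t: "p1 = t *\<^sub>R v" by blast
    then have "(2 * \<alpha>) *\<^sub>R a + 0 *\<^sub>R b + 0 *\<^sub>R c = (t * \<alpha>) *\<^sub>R a + (t * \<beta>) *\<^sub>R b + (t * \<gamma>) *\<^sub>R c"
      unfolding p1_def v(1) by (simp add: algebra_simps)
    then have e: "2 * \<alpha> = t * \<alpha>" "0 = t * \<beta>" "0 = t * \<gamma>" using coeff3_unique2[OF ind d] by blast+
    have "t = 2" using e(1) v(2) by simp
    then show ?thesis using e by simp
  qed
qed

context ctx begin

lemma scal_eq: assumes "a \<in> Hlb \<sigma>" "primitive v" "v = \<alpha> *\<^sub>R a" "0 < \<alpha>" shows "v = a"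
proof -
  have aN: "a \<in> latN" using assms(1) unfolding Hlb_def by auto
  have vp: "v \<in> latN" "\<forall>t. 0 < t \<and> t < 1 \<longrightarrow> t *\<^sub>R v \<notin> latN" using assms(2) unfolding primitive_def by auto
  have "\<alpha> = 1"
  proof (rule ccontr)
    assume "\<alpha> \<noteq> 1"
    then consider "\<alpha> < 1" | "1 < \<alpha>" by linarith
    then show False
    proof cases
      case 1 then show False using Hlb_prim[OF assms(1) assms(4)] vp(1) assms(3) by simp
    next
      case 2
      have "(1 / \<alpha>) *\<^sub>R v = a" using assms(3,4) by simp
      moreover have "0 < 1 / \<alpha>" "1 / \<alpha> < 1" using 2 by auto
      ultimately show False using vp(2) aN by metis
    qed
  qed
  then show ?thesis using assms(3) by simp
qed

end

context tri begin

lemma pos_s: "pos (convex hull {a, b, c}) = convex_cone hull {a, b, c}"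
  by (simp add: pos_eq cone_hull_convex_hull)

lemma min_gens_sub:
  assumes H: "a \<in> Hlb \<sigma>" "b \<in> Hlb \<sigma>" "c \<in> Hlb \<sigma>"
  shows "min_gens (pos (convex hull {a, b, c})) \<subseteq> {a, b, c}"
proof
  fix v assume "v \<in> min_gens (pos (convex hull {a, b, c}))"
  then have pv: "primitive v" and R: "{t *\<^sub>R v | t. t \<ge> 0} face_of convex_cone hull {a, b, c}"
    unfolding min_gens_def pos_s by auto
  have v0: "v \<noteq> 0" using pv unfolding primitive_def by auto
  have "v \<in> {t *\<^sub>R v | t. t \<ge> 0}" by (intro CollectI exI[of _ 1]) simp
  then have "v \<in> convex_cone hull {a, b, c}" using face_of_imp_subset[OF R] by blast
  then obtain \<alpha> \<beta> \<gamma> where v: "v = \<alpha> *\<^sub>R a + \<beta> *\<^sub>R b + \<gamma> *\<^sub>R c" "0 \<le> \<alpha>" "0 \<le> \<beta>" "0 \<le> \<gamma>"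
    unfolding cc3[OF dist] by blast
  have CC: "\<alpha>' *\<^sub>R a + \<beta>' *\<^sub>R b + \<gamma>' *\<^sub>R c \<in> convex_cone hull {a, b, c}"
    if "0 \<le> \<alpha>'" "0 \<le> \<beta>'" "0 \<le> \<gamma>'" for \<alpha>' \<beta>' \<gamma>'
    unfolding cc3[OF dist] using that by blast
  have R': "{t *\<^sub>R v | t. 0 \<le> t} face_of convex_cone hull {a, b, c}" using R by simp
  have ind2: "independent {b, c, a}" "independent {c, a, b}" using indep by (simp_all add: insert_commute)
  consider "0 < \<alpha>" | "0 < \<beta>" | "0 < \<gamma>"
  proof (rule ccontr)
    assume "\<not> thesis"
    then have "\<alpha> = 0" "\<beta> = 0" "\<gamma> = 0" using that v by force+
    then show False using v v0 by simp
  qed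
  then show "v \<in> {a, b, c}"
  proof cases
    case 1
    have "\<beta> = 0 \<and> \<gamma> = 0" by (rule one_pos_gen[OF indep dist CC R' v(1) 1 v(3,4)])
    then have "v = \<alpha> *\<^sub>R a" using v by simp
    then show ?thesis using scal_eq[OF H(1) pv _ 1] by simp
  next
    case 2
    have CC2: "\<beta>' *\<^sub>R b + \<gamma>' *\<^sub>R c + \<alpha>' *\<^sub>R a \<in> convex_cone hull {a, b, c}"
      if "0 \<le> \<beta>'" "0 \<le> \<gamma>'" "0 \<le> \<alpha>'" for \<alpha>' \<beta>' \<gamma>'
      using CC[OF that(3,1,2)] by (simp add: ac_simps)
    have "v = \<beta> *\<^sub>R b + \<gamma> *\<^sub>R c + \<alpha> *\<^sub>R a" using v(1) by (simp add: ac_simps)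
    then have "\<gamma> = 0 \<and> \<alpha> = 0"
      using one_pos_gen[OF ind2(1) _ _ _ CC2 R'] dist 2 v(2,4) by (metis (no_types, lifting))
    then have "v = \<beta> *\<^sub>R b" using v by simp
    then show ?thesis using scal_eq[OF H(2) pv _ 2] by simp
  next
    case 3
    have CC3: "\<gamma>' *\<^sub>R c + \<alpha>' *\<^sub>R a + \<beta>' *\<^sub>R b \<in> convex_cone hull {a, b, c}"
      if "0 \<le> \<gamma>'" "0 \<le> \<alpha>'" "0 \<le> \<beta>'" for \<alpha>' \<beta>' \<gamma>'
      using CC[OF that(2,3,1)] by (simp add: ac_simps)
    have "v = \<gamma> *\<^sub>R c + \<alpha> *\<^sub>R a + \<beta> *\<^sub>R b" using v(1) by (simp add: ac_simps)
    then have "\<alpha> = 0 \<and> \<beta> = 0"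
      using one_pos_gen[OF ind2(2) _ _ _ CC3 R'] dist 3 v(2,3) by (metis (no_types, lifting))
    then have "v = \<gamma> *\<^sub>R c" using v by simp
    then show ?thesis using scal_eq[OF H(3) pv _ 3] by simp
  qed
qed

end


lemma card3_dist: "card {a, b, c} = 3 \<Longrightarrow> a \<noteq> b \<and> a \<noteq> c \<and> b \<noteq> c"
  by (auto simp: card_insert_if split: if_splits)

lemma elem_tri_data:
  assumes "elementary_triangle s"
  shows "\<exists>a b c. a \<in> latN \<and> b \<in> latN \<and> c \<in> latN \<and> a \<noteq> b \<and> a \<noteq> c \<and> b \<noteq> c \<and>
    \<not> affine_dependent {a, b, c} \<and> s = convex hull {a, b, c} \<and> s \<inter> latN = {a, b, c}"
  using assms card3_dist unfolding elementary_triangle_def by metis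

lemma cc_remove0: "convex_cone hull (G - {0}) = convex_cone hull (G :: (real^3) set)"
proof
  show "convex_cone hull (G - {0}) \<subseteq> convex_cone hull G" by (rule hull_mono) auto
  have "G \<subseteq> convex_cone hull (G - {0})"
  proof
    fix g assume "g \<in> G"
    then show "g \<in> convex_cone hull (G - {0})"
      by (cases "g = 0") (auto simp: convex_cone_hull_contains_0 hull_inc)
  qed
  then show "convex_cone hull G \<subseteq> convex_cone hull (G - {0})"
    by (rule hull_minimal) (rule convex_cone_convex_cone_hull)
qed

context ctx begin

lemma mk_tri:
  assumes "a \<in> latN" "b \<in> latN" "c \<in> latN" "a \<noteq> b" "a \<noteq> c" "b \<noteq> c"
    "\<not> affine_dependent {a, b, c}" "convex hull {a, b, c} \<inter> latN = {a, b, c}"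
    "convex hull {a, b, c} \<subseteq> F" "F face_of PP" "bounded F"
  shows "tri \<sigma> G a b c F"
  unfolding tri_def tri_axioms_def using ctx_axioms assms by blast

lemma pair_face:
  assumes F: "F facet_of PP" "compact F" and F': "F' facet_of PP" "compact F'"
    and s: "elementary_triangle s" "s \<subseteq> F" and s': "elementary_triangle s'" "s' \<subseteq> F'"
    and same: "F = F' \<Longrightarrow> (s \<inter> s') face_of s"
  shows "(pos s \<inter> pos s') face_of pos s"
proof -
  obtain a b c where abc: "a \<in> latN" "b \<in> latN" "c \<in> latN" "a \<noteq> b" "a \<noteq> c" "b \<noteq> c"
    "\<not> affine_dependent {a, b, c}" "s = convex hull {a, b, c}" "s \<inter> latN = {a, b, c}"
    using elem_tri_data[OF s(1)] by blast
  obtain a' b' c' where abc': "a' \<in> latN" "b' \<in> latN" "c' \<in> latN" "a' \<noteq> b'" "a' \<noteq> c'" "b' \<noteq> c'"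
    "\<not> affine_dependent {a', b', c'}" "s' = convex hull {a', b', c'}" "s' \<inter> latN = {a', b', c'}"
    using elem_tri_data[OF s'(1)] by blast
  have Ff: "F face_of PP" "bounded F" "F' face_of PP" "bounded F'"
    using F F' facet_of_imp_face_of compact_imp_bounded by blast+
  interpret T1: tri \<sigma> G a b c F
    by (rule mk_tri) (use abc s Ff in auto)
  have cs: "convex s" "convex s'" using abc(8) abc'(8) by simp_all
  obtain W where W: "W \<subseteq> {a, b, c}" "s \<inter> s' = convex hull W"
  proof (cases "F = F'")
    case True
    then have "(s \<inter> s') face_of convex hull {a, b, c}" using same abc(8) by simp
    then show ?thesis using face_of_convex_hull_affine_independent[OF abc(7)] that by blast
  next
    case False
    have "convex hull {a, b, c} \<inter> convex hull {a', b', c'} = convex hull ({a, b, c} \<inter> {a', b', c'})"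
      by (rule inter_tri[OF _ abc(7) _ _ _ abc'(7) _ _ F(1) _ F'(1) _ False])
         (use abc abc' s s' in auto)
    then show ?thesis using that[of "{a, b, c} \<inter> {a', b', c'}"] abc(8) abc'(8) by blast
  qed
  have "pos s \<inter> pos s' = convex_cone hull W"
  proof
    have "pos s \<inter> pos s' \<subseteq> convex_cone hull (s \<inter> s')"
      unfolding pos_eq by (rule radial[OF Ff cs(1) s(2) cs(2) s'(2)])
    then show "pos s \<inter> pos s' \<subseteq> convex_cone hull W" using W(2) by (simp add: cone_hull_convex_hull)
    have "convex_cone hull W = convex_cone hull (s \<inter> s')" using W(2) by (simp add: cone_hull_convex_hull)
    also have "\<dots> \<subseteq> pos s \<inter> pos s'" unfolding pos_eq by (simp add: hull_mono)
    finally show "convex_cone hull W \<subseteq> pos s \<inter> pos s'" .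
  qed
  moreover have "convex_cone hull W face_of convex_cone hull {a, b, c}"
    by (rule cone_face[OF T1.indep W(1)])
  moreover have "pos s = convex_cone hull {a, b, c}" using abc(8) T1.pos_s by simp
  ultimately show ?thesis by simp
qed

end

theorem lemma6p8:
  fixes \<sigma> :: "(real^3) set"
    and T :: "(real^3) set \<Rightarrow> (real^3) set set"
  assumes "rational_sc_cone \<sigma>"
    and "Hlb \<sigma> = \<Union>{F. F facet_of convex hull (\<sigma> \<inter> (latN - {0})) \<and> compact F} \<inter> latN"
    and "\<forall>F. F facet_of convex hull (\<sigma> \<inter> (latN - {0})) \<and> compact F \<longrightarrow> elem_triangulation (T F) F"
  shows "cone_subdivision
           (pos ` \<Union>{T F | F. F facet_of convex hull (\<sigma> \<inter> (latN - {0})) \<and> compact F}) \<sigma>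
         \<and> (\<forall>F. F facet_of convex hull (\<sigma> \<inter> (latN - {0})) \<and> compact F \<longrightarrow>
              (\<forall>s\<in>T F. basic_cone (pos s) \<and> min_gens (pos s) \<subseteq> Hlb \<sigma>))"
proof -
  obtain G where G: "finite G" "G \<subseteq> latN" "\<sigma> = pos G" and str: "\<sigma> \<inter> uminus ` \<sigma> \<subseteq> {0}"
    using assms(1) unfolding rational_sc_cone_def by blast
  have sG: "\<sigma> = convex_cone hull (G - {0})" using G(3) pos_eq cc_remove0 by simp
  interpret ctx \<sigma> "G - {0}"
    by unfold_locales (use G sG str in auto)
  have PPe: "convex hull (\<sigma> \<inter> (latN - {0})) = PP" by (simp add: PP_def)
  define CF where "CF = {F. F facet_of PP \<and> compact F}"
  have H2: "Hlb \<sigma> = \<Union>CF \<inter> latN" using assms(2) unfolding PPe CF_def by simp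
  have H3: "elem_triangulation (T F) F" if "F \<in> CF" for F using assms(3) that unfolding PPe CF_def by blast
  have HF: "\<exists>F'. F' face_of PP \<and> bounded F' \<and> x \<in> F'" if "x \<in> Hlb \<sigma>" for x
  proof -
    have "x \<in> \<Union>CF \<inter> latN" using that H2 by simp
    then obtain F where "F \<in> CF" "x \<in> F" by blast
    then show ?thesis unfolding CF_def using facet_of_imp_face_of compact_imp_bounded by blast
  qed
  have triF: "elementary_triangle s \<and> s \<subseteq> F" if "F \<in> CF" "s \<in> T F" for F s
    using H3[OF that(1)] that(2) unfolding elem_triangulation_def by blast
  have vertsH: "\<exists>a b c. a \<in> Hlb \<sigma> \<and> b \<in> Hlb \<sigma> \<and> c \<in> Hlb \<sigma> \<and> s = convex hull {a, b, c} \<and> tri \<sigma> (G - {0}) a b c F"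
    if "F \<in> CF" "s \<in> T F" for F s
  proof -
    have st: "elementary_triangle s" "s \<subseteq> F" using triF[OF that] by auto
    obtain a b c where abc: "a \<in> latN" "b \<in> latN" "c \<in> latN" "a \<noteq> b" "a \<noteq> c" "b \<noteq> c"
      "\<not> affine_dependent {a, b, c}" "s = convex hull {a, b, c}" "s \<inter> latN = {a, b, c}"
      using elem_tri_data[OF st(1)] by blast
    have Ff: "F face_of PP" "bounded F" using that(1) unfolding CF_def
      using facet_of_imp_face_of compact_imp_bounded by blast+
    have "tri \<sigma> (G - {0}) a b c F" by (rule mk_tri) (use abc st Ff in auto)
    moreover have "{a, b, c} \<subseteq> F" using st(2) abc(8) hull_subset[of "{a, b, c}" convex] by blast
    then have "{a, b, c} \<subseteq> \<Union>CF \<inter> latN" using abc(1-3) that(1) by blast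
    then have "{a, b, c} \<subseteq> Hlb \<sigma>" using H2 by simp
    ultimately show ?thesis using abc(8) by blast
  qed
  have part2: "\<forall>F. F facet_of PP \<and> compact F \<longrightarrow> (\<forall>s\<in>T F. basic_cone (pos s) \<and> min_gens (pos s) \<subseteq> Hlb \<sigma>)"
  proof (intro allI impI ballI)
    fix F s assume F: "F facet_of PP \<and> compact F" and s: "s \<in> T F"
    then have FC: "F \<in> CF" unfolding CF_def by simp
    obtain a b c where abc: "a \<in> Hlb \<sigma>" "b \<in> Hlb \<sigma>" "c \<in> Hlb \<sigma>" "s = convex hull {a, b, c}"
      and tr: "tri \<sigma> (G - {0}) a b c F"
      using vertsH[OF FC s] by blast
    interpret T1: tri \<sigma> "G - {0}" a b c F by (rule tr)
    have mg: "min_gens (pos s) \<subseteq> {a, b, c}" using T1.min_gens_sub[OF abc(1-3)] abc(4) by simp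
    have "Z_basis {a, b, c}" by (rule T1.Zbasis[OF HF])
    then show "basic_cone (pos s) \<and> min_gens (pos s) \<subseteq> Hlb \<sigma>"
      unfolding basic_cone_def using mg abc(1-3) by blast
  qed
  define Tri where "Tri = \<Union>{T F | F. F facet_of PP \<and> compact F}"
  have TriE: "\<exists>F\<in>CF. s \<in> T F" if "s \<in> Tri" for s using that unfolding Tri_def CF_def by blast
  have finTri: "finite Tri"
  proof -
    have "Tri \<subseteq> (\<lambda>(a, b, c). convex hull {a, b, c}) ` (Hlb \<sigma> \<times> Hlb \<sigma> \<times> Hlb \<sigma>)"
    proof
      fix s assume "s \<in> Tri"
      then obtain F where "F \<in> CF" "s \<in> T F" using TriE by blast
      then obtain a b c where "a \<in> Hlb \<sigma>" "b \<in> Hlb \<sigma>" "c \<in> Hlb \<sigma>" "s = convex hull {a, b, c}"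
        using vertsH by blast
      then show "s \<in> (\<lambda>(a, b, c). convex hull {a, b, c}) ` (Hlb \<sigma> \<times> Hlb \<sigma> \<times> Hlb \<sigma>)"
        by (intro image_eqI[of _ _ "(a, b, c)"]) auto
    qed
    moreover have "finite (Hlb \<sigma> \<times> Hlb \<sigma> \<times> Hlb \<sigma>)" using finite_Hlb by simp
    ultimately show ?thesis using finite_subset by blast
  qed
  have cover: "{0} \<union> \<Union>(pos ` Tri) = \<sigma>"
  proof
    show "{0} \<union> \<Union>(pos ` Tri) \<subseteq> \<sigma>"
    proof
      fix x assume "x \<in> {0} \<union> \<Union>(pos ` Tri)"
      then consider "x = 0" | s where "s \<in> Tri" "x \<in> pos s" by blast
      then show "x \<in> \<sigma>"
      proof cases
        case 1 then show ?thesis by (simp add: sig_0)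
      next
        case 2
        obtain F where "F \<in> CF" "s \<in> T F" using TriE 2(1) by blast
        then have "s \<subseteq> F" using triF by blast
        moreover have "F \<subseteq> PP" using \<open>F \<in> CF\<close> unfolding CF_def
          using facet_of_imp_subset by blast
        ultimately have "s \<subseteq> \<sigma>" using PP_sub by blast
        then have "convex_cone hull s \<subseteq> \<sigma>" by (rule hull_minimal) (rule cc_sig)
        then show ?thesis using 2(2) pos_eq by auto
      qed
    qed
    show "\<sigma> \<subseteq> {0} \<union> \<Union>(pos ` Tri)"
    proof
      fix x assume x: "x \<in> \<sigma>"
      show "x \<in> {0} \<union> \<Union>(pos ` Tri)"
      proof (cases "x = 0")
        case True then show ?thesis by simp
      next
        case False
        obtain C t where C: "C facet_of PP" "compact C" "0 < t" "t *\<^sub>R x \<in> C"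
          using covering[OF x False] by blast
        have CC: "C \<in> CF" using C unfolding CF_def by simp
        then have "\<Union>(T C) = C" using H3 unfolding elem_triangulation_def by blast
        then obtain s where s: "s \<in> T C" "t *\<^sub>R x \<in> s" using C(4) by blast
        have "s \<in> Tri" unfolding Tri_def using s(1) C(1,2) by blast
        have "(1 / t) *\<^sub>R (t *\<^sub>R x) \<in> convex_cone hull s"
          using s(2) C(3) by (intro convex_cone_hull_mul hull_inc) auto
        then have "x \<in> pos s" using C(3) pos_eq by simp
        then show ?thesis using \<open>s \<in> Tri\<close> by blast
      qed
    qed
  qed
  have faces: "(\<tau> \<inter> \<tau>') face_of \<tau> \<and> (\<tau> \<inter> \<tau>') face_of \<tau>'" if tt: "\<tau> \<in> pos ` Tri" "\<tau>' \<in> pos ` Tri" for \<tau> \<tau>'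
  proof -
    obtain s where s: "s \<in> Tri" "\<tau> = pos s" using tt(1) by blast
    obtain s' where s': "s' \<in> Tri" "\<tau>' = pos s'" using tt(2) by blast
    obtain F where F: "F \<in> CF" "s \<in> T F" using TriE s(1) by blast
    obtain F' where F': "F' \<in> CF" "s' \<in> T F'" using TriE s'(1) by blast
    have FF: "F facet_of PP" "compact F" "F' facet_of PP" "compact F'" using F(1) F'(1) unfolding CF_def by auto
    have st: "elementary_triangle s" "s \<subseteq> F" "elementary_triangle s'" "s' \<subseteq> F'"
      using triF F F' by blast+
    have pw: "(s \<inter> s') face_of s \<and> (s \<inter> s') face_of s'" if "F = F'"
      using H3[OF F(1)] F(2) F'(2) that unfolding elem_triangulation_def by blast
    have "(pos s \<inter> pos s') face_of pos s"
      by (rule pair_face[OF FF(1,2) FF(3,4) st]) (use pw in blast)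
    moreover have "(pos s' \<inter> pos s) face_of pos s'"
      by (rule pair_face[OF FF(3,4) FF(1,2) st(3,4) st(1,2)]) (use pw in \<open>auto simp: Int_commute\<close>)
    ultimately show ?thesis using s(2) s'(2) by (simp add: Int_commute)
  qed
  have TT: "\<Union>{T F | F. F facet_of PP \<and> compact F} = Tri" by (simp add: Tri_def)
  show ?thesis
    unfolding PPe TT cone_subdivision_def
  proof (intro conjI ballI)
    show "finite (pos ` Tri)" using finTri by simp
    show "{0} \<union> \<Union>(pos ` Tri) = \<sigma>" by (rule cover)
    show "\<forall>F. F facet_of PP \<and> compact F \<longrightarrow> (\<forall>s\<in>T F. basic_cone (pos s) \<and> min_gens (pos s) \<subseteq> Hlb \<sigma>)"
      by (rule part2)
  next
    fix \<tau> \<tau>' assume "\<tau> \<in> pos ` Tri" "\<tau>' \<in> pos ` Tri"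
    then show "(\<tau> \<inter> \<tau>') face_of \<tau>" "(\<tau> \<inter> \<tau>') face_of \<tau>'" using faces by blast+
  qed
qed


end
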